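(* In the quantum switch model of the context (with $W=\infty$), suppose $(\lambda_{ij}+\epsilon)_{i,j\in\mathcal K}\in\Lambda$ for some $\epsilon>0$. Then the quantum switch is stable under the stationary protocol $\pi_{\mathrm{STAT}}$ defined in the context.
   Context: Quantum switch model. There are $K$ end nodes $\mathcal K=\{1,\dots,K\}$ and a switch (node $0$); time is slotted, $t=0,1,2,\dots$; pair-indexed quantities are symmetric in $(i,j)$. In slot $t$: (i) $C_{0i}(t)\in\{0,1\}$ EPR pairs are generated between the switch and node $i$, where $\{C_{0i}(t)\}_{t\ge0}$ are mutually independent Bernoulli processes (i.i.d. in $t$) with mean $p_i$. (ii) The switch chooses nonnegative integers $F_{ij}(t)=F_{ji}(t)$ (entanglement swaps for pair $(i,j)$, each consuming one stored switch–$i$ and one stored switch–$j$ pair) with $\sum_iF_{ij}(t)\le E_{0j}(t)$; there is no limit on swaps per slot ($W=\infty$); each swap succeeds independently with probability $q$; $R_{ij}(t)$ is the number of successes. (iii) $A_{ij}(t)\in\mathbb N$ new requests for pair $(i,j)$ arrive. Dynamics: $U_{ij}(t+1)=[U_{ij}(t)-E_{ij}(t)-R_{ij}(t)]^++A_{ij}(t)$, $E_{ij}(t+1)=[E_{ij}(t)+R_{ij}(t)-U_{ij}(t)]^+$, $E_{0i}(t+1)=E_{0i}(t)-\sum_jF_{ij}(t)+C_{0i}(t)$, with zero initial values; $U_{ij}$ = pending requests, $E_{ij}$ = stored $i$–$j$ pairs, $E_{0i}$ = stored switch–$i$ pairs; memory unlimited, no decoherence. Requests: $\{A_{ij}(t)\}_t$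 mutually independent across pairs, each stationary ergodic with rate $\lambda_{ij}$, and $\mathbb E[A_{ij}(t)^2\mid H(t)=h]\le A_{\max}^2$ for every $t,i,j$ and realization $h$ of the history $H(t)=(E_{ij}(\tau),U_{ij}(\tau),A_{ij}(\tau),R_{ij}(\tau),C_{0i}(\tau))_{\tau=0}^{t-1}$. Stability: for all $i,j$, $\limsup_{t\to\infty}\frac1t\sum_{\tau=0}^{t-1}\mathbb P[U_{ij}(\tau)>V]\to0$ as $V\to\infty$. $\Lambda$ is the set of nonnegative matrices $(\lambda_{ij})$ for which there exist nonnegative $f_{ij}=f_{ji}$ with $\sum_if_{ij}\le p_j$ for all $j$ and $\lambda_{ij}\le qf_{ij}$ for all $i,j$. Stationary protocol $\pi_{\mathrm{STAT}}$: with $\epsilon$ as in the claim, fix $\tilde f_{ij}=\tilde f_{ji}\ge0$ with $\sum_i\tilde f_{ij}\le p_j$ and $\lambda_{ij}+\epsilon\le q\tilde f_{ij}$ (e.g. $\tilde f_{ij}=(\lambda_{ij}+\epsilon)/q$). Each switch–$i$ pair generated in any slot is, independently, labelled $(i,j)$ with probability $\tilde f_{ij}/p_i$. Let $\mathcal M^i_{ij}(t)$ be the set of switch–$i$ pairs labelled $(i,j)$ not consumed up to slot $t$; whenever $\mathcal M^i_{ij}(t)$ and $\mathcal M^j_{ij}(t)$ are both nonempty, the switch performs swaps for pair $(i,j)$ consuming one pair from each until one of them is empty. *)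

theory Defs
  imports "HOL-Probability.Probability"
begin

text \<open>Primitive randomness on a probability space M:
   C t i w      : EPR pair generated between switch and node i in slot t,
   L t i w      : label (partner node j) of the switch-i pair generated in slot t
                  (any value outside the node set / equal to i means "unlabelled"),
   S t i j k w  : success of the k-th swap for pair (i,j), i<j, in slot t,
   A t i j w    : requests arriving for pair (i,j) in slot t (symmetric in i,j).\<close>

definition nodes :: "nat \<Rightarrow> nat set" where
  "nodes Kn = {1..Kn}"

definition upairs :: "nat \<Rightarrow> (nat \<times> nat) set" where
  "upairs Kn = {(i, j). i \<in> nodes Kn \<and> j \<in> nodes Kn \<and> i < j}"

text \<open>stat_M C L t i j = number of switch-i pairs labelled (i,j) not consumed up to slot t.\<close>
fun stat_M :: "(nat \<Rightarrow> nat \<Rightarrow> 'a \<Rightarrow> bool) \<Rightarrow> (nat \<Rightarrow> nat \<Rightarrow> 'a \<Rightarrow> nat)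
    \<Rightarrow> nat \<Rightarrow> nat \<Rightarrow> nat \<Rightarrow> 'a \<Rightarrow> nat" where
  "stat_M C L 0 i j w = 0"
| "stat_M C L (Suc t) i j w =
     stat_M C L t i j w - min (stat_M C L t i j w) (stat_M C L t j i w)
     + (if C t i w \<and> L t i w = j then 1 else 0)"

definition stat_F :: "(nat \<Rightarrow> nat \<Rightarrow> 'a \<Rightarrow> bool) \<Rightarrow> (nat \<Rightarrow> nat \<Rightarrow> 'a \<Rightarrow> nat)
    \<Rightarrow> nat \<Rightarrow> nat \<Rightarrow> nat \<Rightarrow> 'a \<Rightarrow> nat" where
  "stat_F C L t i j w = min (stat_M C L t i j w) (stat_M C L t j i w)"

definition stat_R :: "(nat \<Rightarrow> nat \<Rightarrow> 'a \<Rightarrow> bool) \<Rightarrow> (nat \<Rightarrow> nat \<Rightarrow> 'a \<Rightarrow> nat)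
    \<Rightarrow> (nat \<Rightarrow> nat \<Rightarrow> nat \<Rightarrow> nat \<Rightarrow> 'a \<Rightarrow> bool) \<Rightarrow> nat \<Rightarrow> nat \<Rightarrow> nat \<Rightarrow> 'a \<Rightarrow> nat" where
  "stat_R C L S t i j w =
     card {k. k < stat_F C L t i j w \<and> S t (min i j) (max i j) k w}"

text \<open>(U_ij(t), E_ij(t)): pending requests and stored i-j pairs.\<close>
fun stat_UE :: "(nat \<Rightarrow> nat \<Rightarrow> 'a \<Rightarrow> bool) \<Rightarrow> (nat \<Rightarrow> nat \<Rightarrow> 'a \<Rightarrow> nat)
    \<Rightarrow> (nat \<Rightarrow> nat \<Rightarrow> nat \<Rightarrow> nat \<Rightarrow> 'a \<Rightarrow> bool) \<Rightarrow> (nat \<Rightarrow> nat \<Rightarrow> nat \<Rightarrow> 'a \<Rightarrow> nat)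
    \<Rightarrow> nat \<Rightarrow> nat \<Rightarrow> nat \<Rightarrow> 'a \<Rightarrow> nat \<times> nat" where
  "stat_UE C L S A 0 i j w = (0, 0)"
| "stat_UE C L S A (Suc t) i j w =
     (let u = fst (stat_UE C L S A t i j w); e = snd (stat_UE C L S A t i j w);
          r = stat_R C L S t i j w
      in (u - e - r + A t i j w, e + r - u))"

definition stat_U where "stat_U C L S A t i j w = fst (stat_UE C L S A t i j w)"
definition stat_E where "stat_E C L S A t i j w = snd (stat_UE C L S A t i j w)"

definition gen_sigma :: "'a measure \<Rightarrow> ('a \<Rightarrow> nat) set \<Rightarrow> 'a measure" where
  "gen_sigma M Fs = sigma (space M) {{w \<in> space M. f w = n} | f n. f \<in> Fs}"

definition stat_hist :: "'a measure \<Rightarrow> nat \<Rightarrow> (nat \<Rightarrow> nat \<Rightarrow> 'a \<Rightarrow> bool) \<Rightarrow> (nat \<Rightarrow> nat \<Rightarrow> 'a \<Rightarrow> nat)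
    \<Rightarrow> (nat \<Rightarrow> nat \<Rightarrow> nat \<Rightarrow> nat \<Rightarrow> 'a \<Rightarrow> bool) \<Rightarrow> (nat \<Rightarrow> nat \<Rightarrow> nat \<Rightarrow> 'a \<Rightarrow> nat)
    \<Rightarrow> nat \<Rightarrow> 'a measure" where
  "stat_hist M Kn C L S A t = gen_sigma M
     ({stat_E C L S A tau i j | tau i j. tau < t \<and> i \<in> nodes Kn \<and> j \<in> nodes Kn \<and> i \<noteq> j}
    \<union> {stat_U C L S A tau i j | tau i j. tau < t \<and> i \<in> nodes Kn \<and> j \<in> nodes Kn \<and> i \<noteq> j}
    \<union> {A tau i j | tau i j. tau < t \<and> i \<in> nodes Kn \<and> j \<in> nodes Kn \<and> i \<noteq> j}
    \<union> {stat_R C L S tau i j | tau i j. tau < t \<and> i \<in> nodes Kn \<and> j \<in> nodes Kn \<and> i \<noteq> j}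
    \<union> {(\<lambda>w. of_bool (C tau i w)) | tau i. tau < t \<and> i \<in> nodes Kn})"

datatype src = SrcC nat nat | SrcL nat nat | SrcS nat nat nat nat

definition src_index :: "nat \<Rightarrow> src set" where
  "src_index Kn = {SrcC t i | t i. i \<in> nodes Kn} \<union> {SrcL t i | t i. i \<in> nodes Kn}
     \<union> {SrcS t i j k | t i j k. (i, j) \<in> upairs Kn}"

definition src_var :: "(nat \<Rightarrow> nat \<Rightarrow> 'a \<Rightarrow> bool) \<Rightarrow> (nat \<Rightarrow> nat \<Rightarrow> 'a \<Rightarrow> nat)
    \<Rightarrow> (nat \<Rightarrow> nat \<Rightarrow> nat \<Rightarrow> nat \<Rightarrow> 'a \<Rightarrow> bool) \<Rightarrow> src \<Rightarrow> 'a \<Rightarrow> nat" where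
  "src_var C L S s w = (case s of SrcC t i \<Rightarrow> of_bool (C t i w) | SrcL t i \<Rightarrow> L t i w
     | SrcS t i j k \<Rightarrow> of_bool (S t i j k w))"

definition nat_seq_space :: "(nat \<Rightarrow> nat) measure" where
  "nat_seq_space = PiM UNIV (\<lambda>_. count_space UNIV)"

definition stationary_process :: "'a measure \<Rightarrow> (nat \<Rightarrow> 'a \<Rightarrow> nat) \<Rightarrow> bool" where
  "stationary_process M X \<longleftrightarrow> (\<forall>s. distr M nat_seq_space (\<lambda>w t. X (t + s) w)
      = distr M nat_seq_space (\<lambda>w t. X t w))"

definition ergodic_process :: "'a measure \<Rightarrow> (nat \<Rightarrow> 'a \<Rightarrow> nat) \<Rightarrow> bool" where
  "ergodic_process M X \<longleftrightarrow> (\<forall>B \<in> sets nat_seq_space.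
      (\<forall>f. (\<lambda>t. f (Suc t)) \<in> B \<longleftrightarrow> f \<in> B) \<longrightarrow>
      measure M {w \<in> space M. (\<lambda>t. X t w) \<in> B} \<in> {0, 1})"

definition indep_rv :: "'a measure \<Rightarrow> 'b measure \<Rightarrow> ('a \<Rightarrow> 'b) \<Rightarrow> 'c measure \<Rightarrow> ('a \<Rightarrow> 'c) \<Rightarrow> bool" where
  "indep_rv M Mx X My Y \<longleftrightarrow> X \<in> measurable M Mx \<and> Y \<in> measurable M My \<and>
     (\<forall>P \<in> sets Mx. \<forall>Q \<in> sets My.
        measure M {w \<in> space M. X w \<in> P \<and> Y w \<in> Q}
        = measure M {w \<in> space M. X w \<in> P} * measure M {w \<in> space M. Y w \<in> Q})"

definition in_Lambda :: "nat \<Rightarrow> (nat \<Rightarrow> real) \<Rightarrow> real \<Rightarrow> (nat \<Rightarrow> nat \<Rightarrow> real) \<Rightarrow> bool" where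
  "in_Lambda Kn p q lam \<longleftrightarrow> (\<exists>f :: nat \<Rightarrow> nat \<Rightarrow> real.
      (\<forall>i j. f i j = f j i \<and> 0 \<le> f i j) \<and>
      (\<forall>j \<in> nodes Kn. (\<Sum>i \<in> nodes Kn - {j}. f i j) \<le> p j) \<and>
      (\<forall>i \<in> nodes Kn. \<forall>j \<in> nodes Kn. i \<noteq> j \<longrightarrow> lam i j \<le> q * f i j))"

definition switch_stable :: "'a measure \<Rightarrow> nat \<Rightarrow> (nat \<Rightarrow> nat \<Rightarrow> nat \<Rightarrow> 'a \<Rightarrow> nat) \<Rightarrow> bool" where
  "switch_stable M Kn U \<longleftrightarrow> (\<forall>i \<in> nodes Kn. \<forall>j \<in> nodes Kn. i \<noteq> j \<longrightarrow>
     ((\<lambda>V::real. limsup (\<lambda>t::nat. ereal ((1 / real t) *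
         (\<Sum>tau<t. measure M {w \<in> space M. real (U tau i j w) > V})))) \<longlongrightarrow> 0) at_top)"

end

theory Submission
  imports Defs
begin

lemma finPiM_sets:
  fixes K :: "'k set"
  assumes K: "finite K"
  shows "sets (PiM K (\<lambda>_. count_space (UNIV::nat set))) = sets (count_space (space (PiM K (\<lambda>_. count_space (UNIV::nat set)))))"
proof -
  let ?P = "PiM K (\<lambda>_. count_space (UNIV::nat set))"
  have sp: "space ?P = PiE K (\<lambda>_. UNIV)" by (simp add: space_PiM)
  have "A \<in> sets ?P" if A: "A \<subseteq> space ?P" for A
  proof -
    have cA: "countable A"
      using countable_subset[OF A] countable_PiE[OF K, of "\<lambda>_. UNIV :: nat set"] sp by auto
    have single: "{x} \<in> sets ?P" if "x \<in> A" for x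
    proof -
      have x: "x \<in> PiE K (\<lambda>_. UNIV)" using that A sp by auto
      have "{x} = PiE K (\<lambda>k. {x k})"
        using x by (intro PiE_singleton[symmetric]) (auto simp: PiE_def)
      moreover have "PiE K (\<lambda>k. {x k}) \<in> sets ?P" using K by (intro sets_PiM_I_finite) auto
      ultimately show ?thesis by simp
    qed
    have "A = (\<Union>x\<in>A. {x})" by auto
    also have "\<dots> \<in> sets ?P" using cA single by (intro sets.countable_UN') auto
    finally show ?thesis .
  qed
  then have "sets ?P = Pow (space ?P)" using sets.sets_into_space by auto
  then show ?thesis by simp
qed

lemma finPiM_meas:
  fixes K :: "'k set" and g :: "('k \<Rightarrow> nat) \<Rightarrow> 'b"
  assumes K: "finite K"
  shows "g \<in> measurable (PiM K (\<lambda>_. count_space (UNIV::nat set))) N \<longleftrightarrow> g \<in> space (PiM K (\<lambda>_. count_space (UNIV::nat set))) \<rightarrow> space N"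
  using measurable_cong_sets[OF finPiM_sets[OF K] refl, of N] by simp

lemma finPiM_borel:
  fixes K :: "'k set" and g :: "('k \<Rightarrow> nat) \<Rightarrow> real"
  assumes K: "finite K"
  shows "g \<in> borel_measurable (PiM K (\<lambda>_. count_space (UNIV::nat set)))"
  using finPiM_meas[OF K, of g borel] by simp

definition vecK :: "(nat \<Rightarrow> nat \<Rightarrow> 'a \<Rightarrow> bool) \<Rightarrow> (nat \<Rightarrow> nat \<Rightarrow> 'a \<Rightarrow> nat)
    \<Rightarrow> (nat \<Rightarrow> nat \<Rightarrow> nat \<Rightarrow> nat \<Rightarrow> 'a \<Rightarrow> bool) \<Rightarrow> src set \<Rightarrow> 'a \<Rightarrow> (src \<Rightarrow> nat)" where
  "vecK C L S K w = restrict (\<lambda>s. src_var C L S s w) K"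

context prob_space
begin

lemma vecK_meas:
  assumes ind: "indep_vars (\<lambda>_. count_space UNIV) (src_var C L S) I" and KI: "K \<subseteq> I"
  shows "vecK C L S K \<in> measurable M (PiM K (\<lambda>_. count_space UNIV))"
proof -
  have "src_var C L S s \<in> measurable M (count_space UNIV)" if "s \<in> I" for s
    using ind that unfolding indep_vars_def by auto
  then show ?thesis unfolding vecK_def using KI by (intro measurable_restrict) auto
qed

lemma vecK_borel:
  assumes ind: "indep_vars (\<lambda>_. count_space UNIV) (src_var C L S) I" and KI: "K \<subseteq> I" and K: "finite K"
  shows "(\<lambda>w. g (vecK C L S K w) :: real) \<in> borel_measurable M"
  using measurable_comp[OF vecK_meas[OF ind KI] finPiM_borel[OF K, of g]] by (simp add: comp_def)

lemma indep_prod: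
  assumes ind: "indep_vars (\<lambda>_. count_space UNIV) (src_var C L S) I"
    and K1: "finite K1" "K1 \<subseteq> I" and K2: "finite K2" "K2 \<subseteq> I" and dis: "K1 \<inter> K2 = {}"
    and b1: "\<And>v. \<bar>g1 v\<bar> \<le> Ba" and b2: "\<And>v. \<bar>g2 v\<bar> \<le> Bb"
  shows "(\<integral>w. g1 (vecK C L S K1 w) * g2 (vecK C L S K2 w) \<partial>M)
       = (\<integral>w. g1 (vecK C L S K1 w) \<partial>M) * (\<integral>w. (g2 (vecK C L S K2 w) :: real) \<partial>M)"
proof -
  define KK where "KK b = (if b then K1 else K2)" for b
  have "indep_vars (\<lambda>b. PiM (KK b) (\<lambda>_. count_space UNIV)) (\<lambda>b \<omega>. restrict (\<lambda>s. src_var C L S s \<omega>) (KK b)) UNIV"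
    using K1 K2 dis by (intro indep_vars_restrict[OF ind]) (auto simp: KK_def disjoint_family_on_def)
  then have iv: "indep_var (PiM K1 (\<lambda>_. count_space UNIV)) (vecK C L S K1) (PiM K2 (\<lambda>_. count_space UNIV)) (vecK C L S K2)"
    unfolding indep_var_def by (rule indep_vars_cong[THEN iffD1, rotated 3]) (auto simp: KK_def vecK_def fun_eq_iff split: bool.split)
  have iv2: "indep_var borel (g1 \<circ> vecK C L S K1) borel (g2 \<circ> vecK C L S K2)"
    by (rule indep_var_compose[OF iv finPiM_borel[OF K1(1)] finPiM_borel[OF K2(1)]])
  have int1: "integrable M (g1 \<circ> vecK C L S K1)"
    by (rule integrable_const_bound[where B=Ba]) (auto simp: b1 vecK_borel[OF ind K1(2) K1(1)] comp_def)
  have int2: "integrable M (g2 \<circ> vecK C L S K2)"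
    by (rule integrable_const_bound[where B=Bb]) (auto simp: b2 vecK_borel[OF ind K2(2) K2(1)] comp_def)
  show ?thesis using indep_var_lebesgue_integral[OF iv2 int1 int2] by (simp add: comp_def)
qed

lemma integral_of_bool:
  assumes "{w \<in> space M. P w} \<in> sets M"
  shows "(\<integral>w. (of_bool (P w) :: real) \<partial>M) = measure M {w \<in> space M. P w}"
proof -
  have "(\<integral>w. (of_bool (P w) :: real) \<partial>M) = (\<integral>w. indicator {w \<in> space M. P w} w \<partial>M)"
    by (intro Bochner_Integration.integral_cong) (auto simp: indicator_def)
  also have "\<dots> = measure M {w \<in> space M. P w}" using assms by simp
  finally show ?thesis .
qed

lemma orth_cheb:
  fixes Y :: "'i \<Rightarrow> 'a \<Rightarrow> real"
  assumes I: "finite I"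
    and Ym: "\<And>x. x \<in> I \<Longrightarrow> Y x \<in> borel_measurable M"
    and Yb: "\<And>x w. x \<in> I \<Longrightarrow> \<bar>Y x w\<bar> \<le> B"
    and orth: "\<And>x y. x \<in> I \<Longrightarrow> y \<in> I \<Longrightarrow> x \<noteq> y \<Longrightarrow> (\<integral>w. Y x w * Y y w \<partial>M) = 0"
    and sq: "\<And>w. (\<Sum>x\<in>I. (Y x w)\<^sup>2) \<le> c"
    and a: "a > 0"
  shows "measure M {w \<in> space M. a \<le> \<bar>\<Sum>x\<in>I. Y x w\<bar>} \<le> c / a\<^sup>2"
proof -
  have prodm: "(\<lambda>w. Y x w * Y y w) \<in> borel_measurable M" if "x \<in> I" "y \<in> I" for x y
    using Ym that by measurable
  have prodint: "integrable M (\<lambda>w. Y x w * Y y w)" if "x \<in> I" "y \<in> I" for x y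
  proof (rule integrable_const_bound[where B="B * B"])
    show "AE w in M. norm (Y x w * Y y w) \<le> B * B"
      using Yb[OF that(1)] Yb[OF that(2)] by (auto simp: abs_mult intro!: mult_mono AE_I2 order_trans[OF abs_ge_zero])
  qed (rule prodm[OF that])
  have sqeq: "(\<Sum>x\<in>I. Y x w)\<^sup>2 = (\<Sum>x\<in>I. \<Sum>y\<in>I. Y x w * Y y w)" for w
    by (simp add: power2_eq_square sum_product)
  have Sm: "(\<lambda>w. (\<Sum>x\<in>I. Y x w)\<^sup>2) \<in> borel_measurable M" using Ym by measurable
  have Sint: "integrable M (\<lambda>w. (\<Sum>x\<in>I. Y x w)\<^sup>2)"
    unfolding sqeq using prodint by (intro Bochner_Integration.integrable_sum) auto
  have ES: "(\<integral>w. (\<Sum>x\<in>I. Y x w)\<^sup>2 \<partial>M) = (\<Sum>x\<in>I. \<integral>w. (Y x w)\<^sup>2 \<partial>M)"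
  proof -
    have "(\<integral>w. (\<Sum>x\<in>I. Y x w)\<^sup>2 \<partial>M) = (\<Sum>x\<in>I. \<Sum>y\<in>I. \<integral>w. Y x w * Y y w \<partial>M)"
      unfolding sqeq using prodint
      by (simp add: Bochner_Integration.integral_sum Bochner_Integration.integrable_sum)
    also have "\<dots> = (\<Sum>x\<in>I. \<integral>w. Y x w * Y x w \<partial>M)"
    proof (rule sum.cong[OF refl])
      fix x assume x: "x \<in> I"
      have "(\<Sum>y\<in>I. \<integral>w. Y x w * Y y w \<partial>M) = (\<integral>w. Y x w * Y x w \<partial>M) + (\<Sum>y\<in>I - {x}. \<integral>w. Y x w * Y y w \<partial>M)"
        using I x by (simp add: sum.remove)
      also have "(\<Sum>y\<in>I - {x}. \<integral>w. Y x w * Y y w \<partial>M) = 0"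
        using orth x by (intro sum.neutral) auto
      finally show "(\<Sum>y\<in>I. \<integral>w. Y x w * Y y w \<partial>M) = (\<integral>w. Y x w * Y x w \<partial>M)" by simp
    qed
    finally show ?thesis by (simp add: power2_eq_square)
  qed
  also have "\<dots> = (\<integral>w. (\<Sum>x\<in>I. (Y x w)\<^sup>2) \<partial>M)"
    using prodint by (simp add: Bochner_Integration.integral_sum power2_eq_square)
  also have "\<dots> \<le> (\<integral>w. c \<partial>M)"
    using prodint sq by (intro integral_mono) (auto simp: power2_eq_square)
  also have "\<dots> = c" by (simp add: prob_space)
  finally have Ec: "(\<integral>w. (\<Sum>x\<in>I. Y x w)\<^sup>2 \<partial>M) \<le> c" .
  have "{w \<in> space M. a \<le> \<bar>\<Sum>x\<in>I. Y x w\<bar>} = {w \<in> space M. a\<^sup>2 \<le> (\<Sum>x\<in>I. Y x w)\<^sup>2}"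
    using a by (auto simp: abs_le_square_iff[symmetric] intro: abs_le_square_iff[THEN iffD1])
  also have "measure M \<dots> \<le> (\<integral>w. (\<Sum>x\<in>I. Y x w)\<^sup>2 \<partial>M) / a\<^sup>2"
    using a by (intro integral_Markov_inequality_measure[OF Sint]) auto
  also have "\<dots> \<le> c / a\<^sup>2" using Ec a by (simp add: divide_right_mono)
  finally show ?thesis .
qed

end

lemma stat_M_cong:
  assumes "\<And>t' x. t' < t \<Longrightarrow> x \<in> {i, j} \<Longrightarrow> C t' x w = C' t' x w' \<and> L t' x w = L' t' x w'"
  shows "stat_M C L t i j w = stat_M C' L' t i j w' \<and> stat_M C L t j i w = stat_M C' L' t j i w'"
  using assms by (induction t) auto

definition narr :: "(nat \<Rightarrow> nat \<Rightarrow> 'a \<Rightarrow> bool) \<Rightarrow> (nat \<Rightarrow> nat \<Rightarrow> 'a \<Rightarrow> nat) \<Rightarrow> nat \<Rightarrow> nat \<Rightarrow> nat \<Rightarrow> 'a \<Rightarrow> nat" where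
  "narr C L t i j w = (\<Sum>\<tau><t. of_bool (C \<tau> i w \<and> L \<tau> i w = j))"

lemma stat_F_sym: "stat_F C L t i j w = stat_F C L t j i w"
  unfolding stat_F_def by simp

lemma M_plus_F: "stat_M C L t i j w + (\<Sum>\<tau><t. stat_F C L \<tau> i j w) = narr C L t i j w"
proof (induction t)
  case 0 then show ?case by (simp add: narr_def)
next
  case (Suc t)
  have le: "min (stat_M C L t i j w) (stat_M C L t j i w) \<le> stat_M C L t i j w" by simp
  show ?case using Suc le by (simp add: narr_def stat_F_def)
qed

lemma M_min_le1: "min (stat_M C L t i j w) (stat_M C L t j i w) \<le> 1"
proof (cases t)
  case 0 then show ?thesis by simp
next
  case (Suc t')
  show ?thesis unfolding Suc by (simp add: min_def)
qed

lemma M_le_narr: "stat_M C L t i j w \<le> narr C L t i j w"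
  using M_plus_F[of C L t i j w] by linarith

lemma narr_le: "narr C L t i j w \<le> t"
proof -
  have "narr C L t i j w \<le> (\<Sum>\<tau><t. 1)" unfolding narr_def by (intro sum_mono) simp
  then show ?thesis by simp
qed

lemma F_le: "stat_F C L t i j w \<le> t"
  using M_le_narr[of C L t i j w] narr_le[of C L t i j w] unfolding stat_F_def by simp

lemma sumF_le: "(\<Sum>\<tau><t. stat_F C L \<tau> i j w) \<le> t"
  using M_plus_F[of C L t i j w] narr_le[of C L t i j w] by linarith

lemma sumF_lower:
  "real (\<Sum>\<tau><t. stat_F C L \<tau> i j w) \<ge> real (narr C L t i j w) - 1 - \<bar>real (narr C L t i j w) - real (narr C L t j i w)\<bar>"
proof -
  have F_eq: "(\<Sum>\<tau><t. stat_F C L \<tau> j i w) = (\<Sum>\<tau><t. stat_F C L \<tau> i j w)"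
    by (simp add: stat_F_sym)
  have e1: "real (stat_M C L t i j w) + real (\<Sum>\<tau><t. stat_F C L \<tau> i j w) = real (narr C L t i j w)"
    using M_plus_F[of C L t i j w] by (metis of_nat_add)
  have e2: "real (stat_M C L t j i w) + real (\<Sum>\<tau><t. stat_F C L \<tau> i j w) = real (narr C L t j i w)"
    using M_plus_F[of C L t j i w] F_eq by (metis of_nat_add)
  have m: "min (real (stat_M C L t i j w)) (real (stat_M C L t j i w)) \<le> 1"
    using M_min_le1[of C L t i j w] by linarith
  show ?thesis using e1 e2 m by (auto simp: min_def split: if_splits)
qed

lemma card_sum_of_bool:
  fixes F n :: nat
  assumes "F \<le> n"
  shows "card {k. k < F \<and> P k} = (\<Sum>k<n. of_bool (k < F \<and> P k) :: nat)"
proof -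
  have "{k. k < F \<and> P k} = {..<n} \<inter> {k. k < F \<and> P k}" using assms by auto
  then show ?thesis by simp
qed

lemma UE_net:
  "int (stat_U C L S A t i j w) - int (stat_E C L S A t i j w)
     = (\<Sum>\<tau><t. int (A \<tau> i j w) - int (stat_R C L S \<tau> i j w))"
  by (induction t) (auto simp: stat_U_def stat_E_def Let_def)

lemma UE_E0:
  assumes "stat_U C L S A (Suc t) i j w > A t i j w"
  shows "stat_E C L S A (Suc t) i j w = 0"
  using assms by (auto simp: stat_U_def stat_E_def Let_def)

lemma stat_R_sym: "stat_R C L S t i j w = stat_R C L S t j i w"
  unfolding stat_R_def by (simp add: stat_F_sym min.commute max.commute)

lemma UE_sym:
  assumes "\<And>t. A t i j w = A t j i w"
  shows "stat_UE C L S A t i j w = stat_UE C L S A t j i w"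
  using assms by (induction t) (auto simp: Let_def stat_R_sym)

definition Cv :: "nat \<Rightarrow> nat \<Rightarrow> (src \<Rightarrow> nat) \<Rightarrow> bool" where "Cv t x v = (v (SrcC t x) \<noteq> 0)"
definition Lv :: "nat \<Rightarrow> nat \<Rightarrow> (src \<Rightarrow> nat) \<Rightarrow> nat" where "Lv t x v = v (SrcL t x)"
definition KCL :: "nat \<Rightarrow> nat \<Rightarrow> nat \<Rightarrow> src set" where
  "KCL i j T = (\<lambda>(t, x). SrcC t x) ` ({..<T} \<times> {i, j}) \<union> (\<lambda>(t, x). SrcL t x) ` ({..<T} \<times> {i, j})"

lemma KCL_finite: "finite (KCL i j T)" unfolding KCL_def by auto

lemma KCL_mono: "T \<le> T' \<Longrightarrow> KCL i j T \<subseteq> KCL i j T'" unfolding KCL_def by auto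


locale swp = prob_space M for M :: "'a measure" +
  fixes Kn :: nat and C :: "nat \<Rightarrow> nat \<Rightarrow> 'a \<Rightarrow> bool" and L :: "nat \<Rightarrow> nat \<Rightarrow> 'a \<Rightarrow> nat"
    and S :: "nat \<Rightarrow> nat \<Rightarrow> nat \<Rightarrow> nat \<Rightarrow> 'a \<Rightarrow> bool" and i j :: nat and q f :: real
  assumes ind: "indep_vars (\<lambda>_. count_space UNIV) (src_var C L S) (src_index Kn)"
    and ij: "(i, j) \<in> upairs Kn"
    and q01: "0 \<le> q" "q \<le> 1"
    and Slaw: "\<And>t k. measure M {w \<in> space M. S t i j k w} = q"
    and arr_i: "\<And>t. measure M {w \<in> space M. C t i w} * measure M {w \<in> space M. L t i w = j} = f"
    and arr_j: "\<And>t. measure M {w \<in> space M. C t j w} * measure M {w \<in> space M. L t j w = i} = f"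
    and f01: "0 \<le> f" "f \<le> 1"
begin

lemma ij_nodes: "i \<in> nodes Kn" "j \<in> nodes Kn" "i < j"
  using ij unfolding upairs_def by auto

lemma srcC_in: "x \<in> nodes Kn \<Longrightarrow> SrcC t x \<in> src_index Kn"
  and srcL_in: "x \<in> nodes Kn \<Longrightarrow> SrcL t x \<in> src_index Kn"
  and srcS_in: "SrcS t i j k \<in> src_index Kn"
  using ij unfolding src_index_def by auto

lemma vecK_C: "SrcC t x \<in> K \<Longrightarrow> vecK C L S K w (SrcC t x) = of_bool (C t x w)"
  and vecK_L: "SrcL t x \<in> K \<Longrightarrow> vecK C L S K w (SrcL t x) = L t x w"
  and vecK_S: "SrcS t x y k \<in> K \<Longrightarrow> vecK C L S K w (SrcS t x y k) = of_bool (S t x y k w)"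
  unfolding vecK_def src_var_def by auto

lemma vecK_pred:
  assumes "finite K" "K \<subseteq> src_index Kn"
  shows "{w \<in> space M. Q (vecK C L S K w)} \<in> sets M"
proof -
  let ?P = "PiM K (\<lambda>_. count_space (UNIV::nat set))"
  have m: "vecK C L S K \<in> measurable M ?P" by (rule vecK_meas[OF ind assms(2)])
  have "{v \<in> space ?P. Q v} \<in> sets ?P" using finPiM_sets[OF assms(1)] by auto
  from measurable_sets[OF m this]
  have "vecK C L S K -` {v \<in> space ?P. Q v} \<inter> space M \<in> sets M" .
  moreover have "vecK C L S K -` {v \<in> space ?P. Q v} \<inter> space M = {w \<in> space M. Q (vecK C L S K w)}"
    using measurable_space[OF m] by auto
  ultimately show ?thesis by simp
qed

lemma E_arr:
  assumes x: "x \<in> nodes Kn" and law: "measure M {w \<in> space M. C t x w} * measure M {w \<in> space M. L t x w = y} = f"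
  shows "(\<integral>w. (of_bool (C t x w \<and> L t x w = y) :: real) \<partial>M) = f"
proof -
  define g1 where "g1 v = (of_bool (v (SrcC t x) \<noteq> 0) :: real)" for v :: "src \<Rightarrow> nat"
  define g2 where "g2 v = (of_bool (v (SrcL t x) = y) :: real)" for v :: "src \<Rightarrow> nat"
  have K: "finite {SrcC t x}" "{SrcC t x} \<subseteq> src_index Kn" "finite {SrcL t x}" "{SrcL t x} \<subseteq> src_index Kn"
    using x srcC_in srcL_in by auto
  have eq: "(of_bool (C t x w \<and> L t x w = y) :: real) = g1 (vecK C L S {SrcC t x} w) * g2 (vecK C L S {SrcL t x} w)" for w
    unfolding g1_def g2_def by (simp add: vecK_C vecK_L)
  have "(\<integral>w. (of_bool (C t x w \<and> L t x w = y) :: real) \<partial>M)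
     = (\<integral>w. g1 (vecK C L S {SrcC t x} w) \<partial>M) * (\<integral>w. g2 (vecK C L S {SrcL t x} w) \<partial>M)"
    unfolding eq by (rule indep_prod[OF ind K, where Ba=1 and Bb=1]) (auto simp: g1_def g2_def)
  also have "(\<integral>w. g1 (vecK C L S {SrcC t x} w) \<partial>M) = measure M {w \<in> space M. C t x w}"
  proof -
    have "(\<integral>w. g1 (vecK C L S {SrcC t x} w) \<partial>M) = (\<integral>w. of_bool (C t x w) \<partial>M)"
      unfolding g1_def by (simp add: vecK_C)
    also have "\<dots> = measure M {w \<in> space M. C t x w}"
    proof (rule integral_of_bool)
      have "{w \<in> space M. (\<lambda>v. v (SrcC t x) \<noteq> 0) (vecK C L S {SrcC t x} w)} \<in> sets M"
        by (rule vecK_pred[OF K(1,2)])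
      then show "{w \<in> space M. C t x w} \<in> sets M" by (simp add: vecK_C)
    qed
    finally show ?thesis .
  qed
  also have "(\<integral>w. g2 (vecK C L S {SrcL t x} w) \<partial>M) = measure M {w \<in> space M. L t x w = y}"
  proof -
    have "(\<integral>w. g2 (vecK C L S {SrcL t x} w) \<partial>M) = (\<integral>w. of_bool (L t x w = y) \<partial>M)"
      unfolding g2_def by (simp add: vecK_L)
    also have "\<dots> = measure M {w \<in> space M. L t x w = y}"
    proof (rule integral_of_bool)
      have "{w \<in> space M. (\<lambda>v. v (SrcL t x) = y) (vecK C L S {SrcL t x} w)} \<in> sets M"
        by (rule vecK_pred[OF K(3,4)])
      then show "{w \<in> space M. L t x w = y} \<in> sets M" by (simp add: vecK_L)
    qed
    finally show ?thesis .
  qed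
  finally show ?thesis using law by simp
qed

lemma narr_cheb:
  assumes x: "x \<in> nodes Kn"
    and law: "\<And>t. measure M {w \<in> space M. C t x w} * measure M {w \<in> space M. L t x w = y} = f"
    and a: "a > 0"
  shows "measure M {w \<in> space M. a \<le> \<bar>real (narr C L t x y w) - real t * f\<bar>} \<le> real t / a\<^sup>2"
proof -
  define KY where "KY \<tau> = {SrcC \<tau> x, SrcL \<tau> x}" for \<tau>
  define gY where "gY \<tau> v = (of_bool (v (SrcC \<tau> x) \<noteq> 0 \<and> v (SrcL \<tau> x) = y) :: real) - f" for \<tau> v
  define Y where "Y \<tau> w = (of_bool (C \<tau> x w \<and> L \<tau> x w = y) :: real) - f" for \<tau> w
  have KYf: "finite (KY \<tau>)" "KY \<tau> \<subseteq> src_index Kn" for \<tau>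
    unfolding KY_def using x srcC_in srcL_in by auto
  have Yrep: "Y \<tau> w = gY \<tau> (vecK C L S (KY \<tau>) w)" for \<tau> w
    unfolding Y_def gY_def KY_def by (simp add: vecK_C vecK_L)
  have Ym: "Y \<tau> \<in> borel_measurable M" for \<tau>
    unfolding Yrep[abs_def] by (rule vecK_borel[OF ind KYf(2) KYf(1)])
  have gYb: "\<bar>gY \<tau> v\<bar> \<le> 1" for \<tau> v unfolding gY_def using f01 by auto
  have EY: "(\<integral>w. Y \<tau> w \<partial>M) = 0" for \<tau>
  proof -
    have m: "(\<lambda>w. (of_bool (C \<tau> x w \<and> L \<tau> x w = y) :: real)) \<in> borel_measurable M"
    proof -
      have "(\<lambda>w. (\<lambda>v. (of_bool (v (SrcC \<tau> x) \<noteq> 0 \<and> v (SrcL \<tau> x) = y) :: real)) (vecK C L S (KY \<tau>) w)) \<in> borel_measurable M"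
        by (rule vecK_borel[OF ind KYf(2) KYf(1)])
      then show ?thesis by (simp add: KY_def vecK_C vecK_L)
    qed
    have "integrable M (\<lambda>w. (of_bool (C \<tau> x w \<and> L \<tau> x w = y) :: real))"
      by (rule integrable_const_bound[where B=1]) (auto simp: m)
    then have "(\<integral>w. Y \<tau> w \<partial>M) = (\<integral>w. (of_bool (C \<tau> x w \<and> L \<tau> x w = y) :: real) \<partial>M) - f"
      unfolding Y_def by (simp add: prob_space)
    then show ?thesis using E_arr[OF x law] by simp
  qed
  have "measure M {w \<in> space M. a \<le> \<bar>\<Sum>\<tau>\<in>{..<t}. Y \<tau> w\<bar>} \<le> real t / a\<^sup>2"
  proof (rule orth_cheb[where B=1])
    show "finite {..<t}" by simp
    show "Y \<tau> \<in> borel_measurable M" for \<tau> by (rule Ym)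
    show "\<bar>Y \<tau> w\<bar> \<le> 1" for \<tau> w using gYb unfolding Yrep by blast
    show "(\<integral>w. Y \<tau> w * Y \<sigma> w \<partial>M) = 0" if "\<tau> \<in> {..<t}" "\<sigma> \<in> {..<t}" "\<tau> \<noteq> \<sigma>" for \<tau> \<sigma>
    proof -
      have dis: "KY \<tau> \<inter> KY \<sigma> = {}" using that unfolding KY_def by auto
      have "(\<integral>w. Y \<tau> w * Y \<sigma> w \<partial>M) = (\<integral>w. gY \<tau> (vecK C L S (KY \<tau>) w) * gY \<sigma> (vecK C L S (KY \<sigma>) w) \<partial>M)"
        unfolding Yrep ..
      also have "\<dots> = (\<integral>w. gY \<tau> (vecK C L S (KY \<tau>) w) \<partial>M) * (\<integral>w. gY \<sigma> (vecK C L S (KY \<sigma>) w) \<partial>M)"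
        by (rule indep_prod[OF ind KYf KYf dis gYb gYb])
      also have "\<dots> = 0" using EY unfolding Yrep by simp
      finally show ?thesis .
    qed
    show "(\<Sum>\<tau>\<in>{..<t}. (Y \<tau> w)\<^sup>2) \<le> real t" for w
    proof -
      have "(\<Sum>\<tau>\<in>{..<t}. (Y \<tau> w)\<^sup>2) \<le> (\<Sum>\<tau>\<in>{..<t}. 1)"
      proof (rule sum_mono)
        fix \<tau> have "\<bar>Y \<tau> w\<bar> \<le> 1" using gYb unfolding Yrep by blast
        then show "(Y \<tau> w)\<^sup>2 \<le> 1" by (simp add: abs_square_le_1)
      qed
      then show ?thesis by simp
    qed
  qed (rule a)
  moreover have "(\<Sum>\<tau>\<in>{..<t}. Y \<tau> w) = real (narr C L t x y w) - real t * f" for w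
    unfolding Y_def narr_def by (simp add: sum_subtractf)
  ultimately show ?thesis by simp
qed

lemma repF:
  assumes "\<tau> \<le> T" "KCL i j T \<subseteq> K"
  shows "stat_F C L \<tau> i j w = stat_F Cv Lv \<tau> i j (vecK C L S K w)"
proof -
  have "stat_M C L \<tau> i j w = stat_M Cv Lv \<tau> i j (vecK C L S K w) \<and> stat_M C L \<tau> j i w = stat_M Cv Lv \<tau> j i (vecK C L S K w)"
  proof (rule stat_M_cong)
    fix t' x assume "t' < \<tau>" "x \<in> {i, j}"
    then have "SrcC t' x \<in> K" "SrcL t' x \<in> K" using assms unfolding KCL_def by force+
    then show "C t' x w = Cv t' x (vecK C L S K w) \<and> L t' x w = Lv t' x (vecK C L S K w)"
      unfolding Cv_def Lv_def vecK_def src_var_def by simp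
  qed
  then show ?thesis unfolding stat_F_def by simp
qed


lemma KCL_src: "KCL i j T \<subseteq> src_index Kn"
  unfolding KCL_def using ij_nodes srcC_in srcL_in by auto

definition Z :: "nat \<Rightarrow> nat \<Rightarrow> 'a \<Rightarrow> real" where
  "Z \<tau> k w = of_bool (k < stat_F C L \<tau> i j w) * (of_bool (S \<tau> i j k w) - q)"

lemma Z_cheb:
  assumes a: "a > 0"
  shows "measure M {w \<in> space M. a \<le> \<bar>\<Sum>p\<in>{..<t} \<times> {..<t}. Z (fst p) (snd p) w\<bar>} \<le> real t / a\<^sup>2"
proof (rule orth_cheb[where B=1, OF _ _ _ _ _ a])
  show "finite ({..<t} \<times> {..<t})" by simp
  define KZ where "KZ \<tau> k = KCL i j \<tau> \<union> {SrcS \<tau> i j k}" for \<tau> k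
  define gZ where "gZ \<tau> k v = (of_bool (k < stat_F Cv Lv \<tau> i j v) * (of_bool (v (SrcS \<tau> i j k) \<noteq> 0) - q) :: real)" for \<tau> k v
  have KZf: "finite (KZ \<tau> k)" "KZ \<tau> k \<subseteq> src_index Kn" for \<tau> k
    unfolding KZ_def using KCL_finite KCL_src srcS_in by auto
  have Zrep: "Z \<tau> k w = gZ \<tau> k (vecK C L S (KZ \<tau> k) w)" for \<tau> k w
  proof -
    have F: "stat_F C L \<tau> i j w = stat_F Cv Lv \<tau> i j (vecK C L S (KZ \<tau> k) w)"
      by (rule repF[where T=\<tau>]) (auto simp: KZ_def)
    show ?thesis unfolding Z_def gZ_def F by (simp add: KZ_def vecK_S)
  qed
  show "(\<lambda>w. Z (fst p) (snd p) w) \<in> borel_measurable M" for p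
    unfolding Zrep by (rule vecK_borel[OF ind KZf(2) KZf(1)])
  have sb: "\<bar>(of_bool b :: real) - q\<bar> \<le> 1" for b using q01 by auto
  have Zb: "\<bar>Z \<tau> k w\<bar> \<le> 1" for \<tau> k w
    unfolding Z_def using sb[of "S \<tau> i j k w"] by (auto simp: abs_mult)
  show "\<bar>Z (fst p) (snd p) w\<bar> \<le> 1" for p w by (rule Zb)
  show "(\<integral>w. Z (fst p) (snd p) w * Z (fst p') (snd p') w \<partial>M) = 0"
    if "p \<in> {..<t} \<times> {..<t}" "p' \<in> {..<t} \<times> {..<t}" "p \<noteq> p'" for p p'
  proof -
    obtain \<tau> k where p: "p = (\<tau>, k)" by (cases p)
    obtain \<tau>' k' where p': "p' = (\<tau>', k')" by (cases p')
    define T where "T = max \<tau> \<tau>'"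
    define K1 where "K1 = KCL i j T \<union> {SrcS \<tau>' i j k'}"
    define K2 where "K2 = {SrcS \<tau> i j k}"
    define g1 where "g1 v = (of_bool (k < stat_F Cv Lv \<tau> i j v) * of_bool (k' < stat_F Cv Lv \<tau>' i j v)
        * (of_bool (v (SrcS \<tau>' i j k') \<noteq> 0) - q) :: real)" for v :: "src \<Rightarrow> nat"
    define g2 where "g2 v = (of_bool (v (SrcS \<tau> i j k) \<noteq> 0) - q :: real)" for v :: "src \<Rightarrow> nat"
    have K1f: "finite K1" "K1 \<subseteq> src_index Kn" unfolding K1_def using KCL_finite KCL_src srcS_in by auto
    have K2f: "finite K2" "K2 \<subseteq> src_index Kn" unfolding K2_def using srcS_in by auto
    have dis: "K1 \<inter> K2 = {}" using that p p' unfolding K1_def K2_def KCL_def by auto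
    have g1b: "\<bar>g1 v\<bar> \<le> 1" for v
      unfolding g1_def using sb[of "v (SrcS \<tau>' i j k') \<noteq> 0"] by (auto simp: abs_mult)
    have g2b: "\<bar>g2 v\<bar> \<le> 1" for v unfolding g2_def using sb by blast
    have rep: "Z \<tau> k w * Z \<tau>' k' w = g1 (vecK C L S K1 w) * g2 (vecK C L S K2 w)" for w
    proof -
      have F1: "stat_F C L \<tau> i j w = stat_F Cv Lv \<tau> i j (vecK C L S K1 w)"
        by (rule repF[where T=T]) (auto simp: T_def K1_def)
      have F2: "stat_F C L \<tau>' i j w = stat_F Cv Lv \<tau>' i j (vecK C L S K1 w)"
        by (rule repF[where T=T]) (auto simp: T_def K1_def)
      show ?thesis unfolding Z_def g1_def g2_def F1 F2 by (simp add: vecK_S K1_def K2_def mult_ac)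
    qed
    have E2: "(\<integral>w. g2 (vecK C L S K2 w) \<partial>M) = 0"
    proof -
      have m: "{w \<in> space M. S \<tau> i j k w} \<in> sets M"
      proof -
        have "{w \<in> space M. (\<lambda>v. v (SrcS \<tau> i j k) \<noteq> 0) (vecK C L S K2 w)} \<in> sets M"
          by (rule vecK_pred[OF K2f])
        then show ?thesis by (simp add: K2_def vecK_S)
      qed
      have bm: "(\<lambda>w. (of_bool (S \<tau> i j k w) :: real)) \<in> borel_measurable M"
      proof -
        have "(\<lambda>w. (\<lambda>v. (of_bool (v (SrcS \<tau> i j k) \<noteq> 0) :: real)) (vecK C L S K2 w)) \<in> borel_measurable M"
          by (rule vecK_borel[OF ind K2f(2) K2f(1)])
        then show ?thesis by (simp add: K2_def vecK_S)
      qed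
      have "(\<integral>w. g2 (vecK C L S K2 w) \<partial>M) = (\<integral>w. (of_bool (S \<tau> i j k w) :: real) \<partial>M) - q"
      proof -
        have "integrable M (\<lambda>w. (of_bool (S \<tau> i j k w) :: real))"
          by (rule integrable_const_bound[where B=1]) (auto simp: bm)
        then show ?thesis unfolding g2_def by (simp add: K2_def vecK_S prob_space)
      qed
      also have "\<dots> = 0" using integral_of_bool[OF m] Slaw by simp
      finally show ?thesis .
    qed
    have "(\<integral>w. Z \<tau> k w * Z \<tau>' k' w \<partial>M) = (\<integral>w. g1 (vecK C L S K1 w) * g2 (vecK C L S K2 w) \<partial>M)"
      unfolding rep ..
    also have "\<dots> = (\<integral>w. g1 (vecK C L S K1 w) \<partial>M) * (\<integral>w. g2 (vecK C L S K2 w) \<partial>M)"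
      by (rule indep_prod[OF ind K1f K2f dis g1b g2b])
    also have "\<dots> = 0" using E2 by simp
    finally show ?thesis using p p' by simp
  qed
  show "(\<Sum>p\<in>{..<t} \<times> {..<t}. (Z (fst p) (snd p) w)\<^sup>2) \<le> real t" for w
  proof -
    have "(\<Sum>p\<in>{..<t} \<times> {..<t}. (Z (fst p) (snd p) w)\<^sup>2) = (\<Sum>\<tau><t. \<Sum>k<t. (Z \<tau> k w)\<^sup>2)"
      by (simp add: sum.cartesian_product case_prod_beta)
    also have "\<dots> \<le> (\<Sum>\<tau><t. \<Sum>k<t. (of_bool (k < stat_F C L \<tau> i j w) :: real))"
    proof (intro sum_mono)
      fix \<tau> k
      have "\<bar>(of_bool (S \<tau> i j k w) :: real) - q\<bar> \<le> 1" by (rule sb)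
      then have "((of_bool (S \<tau> i j k w) :: real) - q)\<^sup>2 \<le> 1" by (simp add: abs_square_le_1)
      then show "(Z \<tau> k w)\<^sup>2 \<le> of_bool (k < stat_F C L \<tau> i j w)"
        unfolding Z_def by (simp add: power_mult_distrib)
    qed
    also have "\<dots> = (\<Sum>\<tau><t. real (stat_F C L \<tau> i j w))"
    proof (rule sum.cong[OF refl])
      fix \<tau> assume "\<tau> \<in> {..<t}"
      then have "stat_F C L \<tau> i j w \<le> t" using F_le[of C L \<tau> i j w] by simp
      then have "{..<t} \<inter> {k. k < stat_F C L \<tau> i j w} = {..<stat_F C L \<tau> i j w}" by auto
      then show "(\<Sum>k<t. (of_bool (k < stat_F C L \<tau> i j w) :: real)) = real (stat_F C L \<tau> i j w)"
        by simp
    qed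
    also have "\<dots> = real (\<Sum>\<tau><t. stat_F C L \<tau> i j w)" by simp
    also have "\<dots> \<le> real t" using sumF_le[where C=C and L=L and t=t and i=i and j=j and w=w] by (simp only: of_nat_le_iff)
    finally show ?thesis .
  qed
qed

lemma R_decomp:
  "(\<Sum>\<tau><t. real (stat_R C L S \<tau> i j w))
     = (\<Sum>p\<in>{..<t} \<times> {..<t}. Z (fst p) (snd p) w) + q * real (\<Sum>\<tau><t. stat_F C L \<tau> i j w)"
proof -
  have R: "real (stat_R C L S \<tau> i j w) = (\<Sum>k<t. Z \<tau> k w) + q * real (stat_F C L \<tau> i j w)"
    if "\<tau> < t" for \<tau>
  proof -
    have Ft: "stat_F C L \<tau> i j w \<le> t" using F_le[of C L \<tau> i j w] that by simp
    have "stat_R C L S \<tau> i j w = card {k. k < stat_F C L \<tau> i j w \<and> S \<tau> i j k w}"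
      unfolding stat_R_def using ij_nodes by (simp add: min_def max_def)
    also have "\<dots> = (\<Sum>k<t. of_bool (k < stat_F C L \<tau> i j w \<and> S \<tau> i j k w))"
      by (rule card_sum_of_bool[OF Ft])
    finally have "real (stat_R C L S \<tau> i j w) = (\<Sum>k<t. (of_bool (k < stat_F C L \<tau> i j w \<and> S \<tau> i j k w) :: real))"
      by simp
    also have "\<dots> = (\<Sum>k<t. Z \<tau> k w + q * of_bool (k < stat_F C L \<tau> i j w))"
      unfolding Z_def by (intro sum.cong) (auto simp: algebra_simps)
    also have "\<dots> = (\<Sum>k<t. Z \<tau> k w) + q * (\<Sum>k<t. (of_bool (k < stat_F C L \<tau> i j w) :: real))"
      by (simp add: sum.distrib sum_distrib_left)
    also have "(\<Sum>k<t. (of_bool (k < stat_F C L \<tau> i j w) :: real)) = real (stat_F C L \<tau> i j w)"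
    proof -
      have "{..<t} \<inter> {k. k < stat_F C L \<tau> i j w} = {..<stat_F C L \<tau> i j w}" using Ft by auto
      then show ?thesis by simp
    qed
    finally show ?thesis .
  qed
  have "(\<Sum>\<tau><t. real (stat_R C L S \<tau> i j w)) = (\<Sum>\<tau><t. (\<Sum>k<t. Z \<tau> k w) + q * real (stat_F C L \<tau> i j w))"
    using R by (intro sum.cong) auto
  also have "\<dots> = (\<Sum>\<tau><t. \<Sum>k<t. Z \<tau> k w) + q * real (\<Sum>\<tau><t. stat_F C L \<tau> i j w)"
    by (simp add: sum.distrib sum_distrib_left)
  also have "(\<Sum>\<tau><t. \<Sum>k<t. Z \<tau> k w) = (\<Sum>p\<in>{..<t} \<times> {..<t}. Z (fst p) (snd p) w)"
    by (simp add: sum.cartesian_product case_prod_beta)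
  finally show ?thesis .
qed

lemma Z_meas: "(\<lambda>w. Z \<tau> k w) \<in> borel_measurable M"
proof -
  define KZ where "KZ = KCL i j \<tau> \<union> {SrcS \<tau> i j k}"
  have KZf: "finite KZ" "KZ \<subseteq> src_index Kn"
    unfolding KZ_def using KCL_finite KCL_src srcS_in by auto
  have F: "stat_F C L \<tau> i j w = stat_F Cv Lv \<tau> i j (vecK C L S KZ w)" for w
    by (rule repF[where T=\<tau>]) (auto simp: KZ_def)
  have "(\<lambda>w. (\<lambda>v. of_bool (k < stat_F Cv Lv \<tau> i j v) * (of_bool (v (SrcS \<tau> i j k) \<noteq> 0) - q)) (vecK C L S KZ w)) \<in> borel_measurable M"
    by (rule vecK_borel[OF ind KZf(2) KZf(1)])
  then show ?thesis unfolding Z_def F by (simp add: KZ_def vecK_S)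
qed

lemma narr_meas:
  assumes x: "x \<in> nodes Kn"
  shows "(\<lambda>w. real (narr C L t x y w)) \<in> borel_measurable M"
proof -
  have m: "(\<lambda>w. (of_bool (C \<tau> x w \<and> L \<tau> x w = y) :: real)) \<in> borel_measurable M" for \<tau>
  proof -
    have Kf: "finite {SrcC \<tau> x, SrcL \<tau> x}" "{SrcC \<tau> x, SrcL \<tau> x} \<subseteq> src_index Kn"
      using x srcC_in srcL_in by auto
    have "(\<lambda>w. (\<lambda>v. (of_bool (v (SrcC \<tau> x) \<noteq> 0 \<and> v (SrcL \<tau> x) = y) :: real)) (vecK C L S {SrcC \<tau> x, SrcL \<tau> x} w)) \<in> borel_measurable M"
      by (rule vecK_borel[OF ind Kf(2) Kf(1)])
    then show ?thesis by (simp add: vecK_C vecK_L)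
  qed
  have "(\<lambda>w. \<Sum>\<tau><t. (of_bool (C \<tau> x w \<and> L \<tau> x w = y) :: real)) \<in> borel_measurable M"
    using m by (intro borel_measurable_sum) auto
  then show ?thesis unfolding narr_def by simp
qed

lemma measure_le3:
  assumes "X \<subseteq> B1 \<union> B2 \<union> B3" "B1 \<in> sets M" "B2 \<in> sets M" "B3 \<in> sets M"
  shows "measure M X \<le> measure M B1 + measure M B2 + measure M B3"
proof (cases "X \<in> sets M")
  case True
  have "measure M X \<le> measure M (B1 \<union> B2 \<union> B3)" using assms True by (intro finite_measure_mono) auto
  also have "\<dots> \<le> measure M (B1 \<union> B2) + measure M B3" using assms by (intro measure_subadditive) auto
  also have "measure M (B1 \<union> B2) \<le> measure M B1 + measure M B2" using assms by (intro measure_subadditive) auto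
  finally show ?thesis by simp
next
  case False
  then show ?thesis by (simp add: measure_notin_sets)
qed

lemma R_low:
  assumes lamb: "lamb \<ge> 0" "lamb + \<epsilon> \<le> q * f" and e: "\<epsilon> > 0" and t: "real t * \<epsilon> \<ge> 4"
  shows "measure M {w \<in> space M. (\<Sum>\<tau><t. real (stat_R C L S \<tau> i j w)) < real t * (lamb + \<epsilon> / 3)}
     \<le> (36 / \<epsilon>\<^sup>2 + 2 * (12 * q / \<epsilon>)\<^sup>2) / real t"
proof -
  have qf: "q * f > 0" using lamb e by linarith
  have qpos: "q > 0" using qf q01 f01 by (metis less_eq_real_def mult_eq_0_iff)
  define \<theta> where "\<theta> = \<epsilon> / (12 * q)"
  have th: "\<theta> > 0" unfolding \<theta>_def using e qpos by simp
  have qth: "q * \<theta> = \<epsilon> / 12" unfolding \<theta>_def using qpos by simp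
  have "t \<noteq> 0"
  proof
    assume "t = 0" then show False using t by simp
  qed
  then have tpos: "real t > 0" by simp
  define a1 where "a1 = real t * \<epsilon> / 6"
  define a2 where "a2 = real t * \<theta>"
  have a1: "a1 > 0" unfolding a1_def using tpos e by simp
  have a2: "a2 > 0" unfolding a2_def using tpos th by simp
  let ?SZ = "\<lambda>w. \<Sum>p\<in>{..<t} \<times> {..<t}. Z (fst p) (snd p) w"
  let ?B1 = "{w \<in> space M. a1 \<le> \<bar>?SZ w\<bar>}"
  let ?B2 = "{w \<in> space M. a2 \<le> \<bar>real (narr C L t i j w) - real t * f\<bar>}"
  let ?B3 = "{w \<in> space M. a2 \<le> \<bar>real (narr C L t j i w) - real t * f\<bar>}"
  have sub: "{w \<in> space M. (\<Sum>\<tau><t. real (stat_R C L S \<tau> i j w)) < real t * (lamb + \<epsilon> / 3)} \<subseteq> ?B1 \<union> ?B2 \<union> ?B3"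
  proof (rule subsetI, rule ccontr)
    fix w assume w: "w \<in> {w \<in> space M. (\<Sum>\<tau><t. real (stat_R C L S \<tau> i j w)) < real t * (lamb + \<epsilon> / 3)}"
      and nw: "w \<notin> ?B1 \<union> ?B2 \<union> ?B3"
    define Ni where "Ni = real (narr C L t i j w)"
    define Nj where "Nj = real (narr C L t j i w)"
    define SF where "SF = real (\<Sum>\<tau><t. stat_F C L \<tau> i j w)"
    define T where "T = real t"
    have h1: "\<bar>?SZ w\<bar> < a1" and h2: "\<bar>Ni - T * f\<bar> < a2" and h3: "\<bar>Nj - T * f\<bar> < a2"
      using w nw unfolding Ni_def Nj_def T_def by auto
    have low: "SF \<ge> Ni - 1 - \<bar>Ni - Nj\<bar>" unfolding SF_def Ni_def Nj_def by (rule sumF_lower)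
    have SF1: "SF \<ge> T * f - 3 * a2 - 1" using low h2 h3 by linarith
    have "q * SF \<ge> q * (T * f - 3 * a2 - 1)" using SF1 qpos by (intro mult_left_mono) auto
    moreover have "q * (T * f - 3 * a2 - 1) = T * (q * f) - T * \<epsilon> / 4 - q"
      unfolding a2_def T_def using qth by (simp add: algebra_simps)
    moreover have "T * (q * f) \<ge> T * (lamb + \<epsilon>)" using lamb tpos unfolding T_def by (intro mult_left_mono) auto
    moreover have "(\<Sum>\<tau><t. real (stat_R C L S \<tau> i j w)) = ?SZ w + q * SF" unfolding SF_def by (rule R_decomp)
    moreover have "(\<Sum>\<tau><t. real (stat_R C L S \<tau> i j w)) < T * (lamb + \<epsilon> / 3)" using w unfolding T_def by simp
    moreover have "T * \<epsilon> \<ge> 4 * q" using t q01 unfolding T_def by linarith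
    ultimately show False using h1 unfolding a1_def T_def by (simp add: algebra_simps)
  qed
  have B1m: "?B1 \<in> sets M" using Z_meas by measurable
  have B2m: "?B2 \<in> sets M" using narr_meas[OF ij_nodes(1)] by measurable
  have B3m: "?B3 \<in> sets M" using narr_meas[OF ij_nodes(2)] by measurable
  have "measure M {w \<in> space M. (\<Sum>\<tau><t. real (stat_R C L S \<tau> i j w)) < real t * (lamb + \<epsilon> / 3)}
      \<le> measure M ?B1 + measure M ?B2 + measure M ?B3"
    by (rule measure_le3[OF sub B1m B2m B3m])
  also have "\<dots> \<le> real t / a1\<^sup>2 + real t / a2\<^sup>2 + real t / a2\<^sup>2"
    using Z_cheb[OF a1, of t] narr_cheb[OF ij_nodes(1) arr_i a2, of t] narr_cheb[OF ij_nodes(2) arr_j a2, of t]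
    by linarith
  also have "\<dots> = (36 / \<epsilon>\<^sup>2 + 2 * (12 * q / \<epsilon>)\<^sup>2) / real t"
    unfolding a1_def a2_def \<theta>_def using tpos e qpos by (simp add: field_simps power2_eq_square)
  finally show ?thesis .
qed

lemma F_meas: "(\<lambda>w. real (stat_F C L \<tau> i j w)) \<in> borel_measurable M"
proof -
  have F: "stat_F C L \<tau> i j w = stat_F Cv Lv \<tau> i j (vecK C L S (KCL i j \<tau>) w)" for w
    by (rule repF[where T=\<tau>]) auto
  have "(\<lambda>w. (\<lambda>v. real (stat_F Cv Lv \<tau> i j v)) (vecK C L S (KCL i j \<tau>) w)) \<in> borel_measurable M"
    by (rule vecK_borel[OF ind KCL_src KCL_finite])
  then show ?thesis unfolding F by simp
qed

lemma SR_meas: "(\<lambda>w. \<Sum>\<tau><t. real (stat_R C L S \<tau> i j w)) \<in> borel_measurable M"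
proof -
  have "(\<lambda>w. (\<Sum>p\<in>{..<t} \<times> {..<t}. Z (fst p) (snd p) w) + q * (\<Sum>\<tau><t. real (stat_F C L \<tau> i j w))) \<in> borel_measurable M"
    using Z_meas F_meas by measurable
  then show ?thesis unfolding R_decomp by simp
qed

end

lemma cesaro0:
  fixes e :: "nat \<Rightarrow> real"
  assumes e: "e \<longlonglongrightarrow> 0"
  shows "(\<lambda>t. (1 / real t) * (\<Sum>\<tau><t. e \<tau>)) \<longlonglongrightarrow> 0"
proof (rule LIMSEQ_I)
  fix r :: real assume r: "r > 0"
  obtain N where N: "\<And>n. n \<ge> N \<Longrightarrow> norm (e n) < r / 2"
    using LIMSEQ_D[OF e, of "r/2"] r by auto
  define Bd where "Bd = (\<Sum>\<tau><N. \<bar>e \<tau>\<bar>)"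
  have Bd0: "Bd \<ge> 0" unfolding Bd_def by (simp add: sum_nonneg)
  obtain N2 :: nat where N2: "real N2 > 2 * Bd / r" using reals_Archimedean2 by blast
  show "\<exists>no. \<forall>n\<ge>no. norm ((1 / real n) * (\<Sum>\<tau><n. e \<tau>) - 0) < r"
  proof (intro exI allI impI)
    fix n assume n: "n \<ge> N + N2 + 1"
    have npos: "real n > 0" using n by simp
    have split: "(\<Sum>\<tau><n. e \<tau>) = (\<Sum>\<tau><N. e \<tau>) + (\<Sum>\<tau>\<in>{N..<n}. e \<tau>)"
    proof -
      have "(\<Sum>\<tau>\<in>{0..<N}. e \<tau>) + (\<Sum>\<tau>\<in>{N..<n}. e \<tau>) = (\<Sum>\<tau>\<in>{0..<n}. e \<tau>)"
        using n by (intro sum.atLeastLessThan_concat) auto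
      then show ?thesis by (simp add: atLeast0LessThan)
    qed
    have a1: "\<bar>\<Sum>\<tau><N. e \<tau>\<bar> \<le> Bd" unfolding Bd_def by (rule sum_abs)
    have a2: "\<bar>\<Sum>\<tau>\<in>{N..<n}. e \<tau>\<bar> \<le> (\<Sum>\<tau>\<in>{N..<n}. r / 2)"
      using N by (intro order.trans[OF sum_abs] sum_mono) (auto intro: less_imp_le)
    have a3: "(\<Sum>\<tau>\<in>{N..<n}. r / 2) \<le> real n * (r / 2)" using r by simp
    have "\<bar>\<Sum>\<tau><n. e \<tau>\<bar> \<le> Bd + real n * (r / 2)" using split a1 a2 a3 by linarith
    moreover have "Bd < real n * (r / 2)"
    proof -
      have "2 * Bd / r < real n" using N2 n by linarith
      then show ?thesis using r by (simp add: field_simps)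
    qed
    ultimately have "\<bar>\<Sum>\<tau><n. e \<tau>\<bar> < real n * r" by linarith
    then show "norm ((1 / real n) * (\<Sum>\<tau><n. e \<tau>) - 0) < r"
      using npos by (simp add: abs_mult field_simps)
  qed
qed

lemma limsup_bound:
  fixes u e :: "nat \<Rightarrow> real"
  assumes u0: "\<And>t. 0 \<le> u t" and ue: "\<And>t. u t \<le> e t + h" and e: "e \<longlonglongrightarrow> 0" and h: "h \<ge> 0"
  shows "0 \<le> limsup (\<lambda>t. ereal ((1 / real t) * (\<Sum>\<tau><t. u \<tau>)))"
    and "limsup (\<lambda>t. ereal ((1 / real t) * (\<Sum>\<tau><t. u \<tau>))) \<le> ereal h"
proof -
  show "0 \<le> limsup (\<lambda>t. ereal ((1 / real t) * (\<Sum>\<tau><t. u \<tau>)))"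
  proof (rule le_Limsup)
    have "0 \<le> (1 / real t) * (\<Sum>\<tau><t. u \<tau>)" for t by (simp add: sum_nonneg u0)
    then show "\<forall>\<^sub>F x in sequentially. 0 \<le> ereal ((1 / real x) * (\<Sum>\<tau><x. u \<tau>))" by simp
  qed simp
  define c where "c t = (1 / real t) * (\<Sum>\<tau><t. e \<tau>)" for t
  have c: "c \<longlonglongrightarrow> 0" unfolding c_def by (rule cesaro0[OF e])
  have le: "(1 / real t) * (\<Sum>\<tau><t. u \<tau>) \<le> c t + h" for t
  proof (cases "t = 0")
    case True then show ?thesis using h by (simp add: c_def)
  next
    case False
    have "(1 / real t) * (\<Sum>\<tau><t. u \<tau>) \<le> (1 / real t) * (\<Sum>\<tau><t. e \<tau> + h)"
      using ue by (intro mult_left_mono sum_mono) auto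
    also have "\<dots> = c t + h" using False by (simp add: c_def sum.distrib field_simps)
    finally show ?thesis .
  qed
  have "limsup (\<lambda>t. ereal ((1 / real t) * (\<Sum>\<tau><t. u \<tau>))) \<le> limsup (\<lambda>t. ereal (c t + h))"
    using le by (intro Limsup_mono always_eventually) auto
  also have "limsup (\<lambda>t. ereal (c t + h)) = ereal h"
  proof (rule lim_imp_Limsup)
    show "\<not> trivial_limit sequentially" by simp
    have "(\<lambda>t. c t + h) \<longlonglongrightarrow> 0 + h" by (intro tendsto_intros c)
    then show "(\<lambda>t. ereal (c t + h)) \<longlonglongrightarrow> ereal h" by simp
  qed
  finally show "limsup (\<lambda>t. ereal ((1 / real t) * (\<Sum>\<tau><t. u \<tau>))) \<le> ereal h" .
qed

lemma A0_int:
  fixes X :: "'a \<Rightarrow> nat"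
  assumes M: "prob_space M" and Xm: "X \<in> measurable M (count_space UNIV)"
    and mom: "AE w in M. nn_cond_exp M (sigma (space M) {}) (\<lambda>w. ennreal ((real (X w))\<^sup>2)) w \<le> ennreal B"
  shows "integrable M (\<lambda>w. real (X w))"
proof -
  interpret prob_space M by (rule M)
  let ?F = "sigma (space M) {}"
  have sub: "subalgebra M ?F"
    unfolding subalgebra_def by (auto simp: sets.sigma_sets_subset)
  interpret fms: finite_measure_subalgebra M ?F
    by unfold_locales (rule sub)
  have sfs: "sigma_finite_subalgebra M ?F"
    by (rule finite_measure_subalgebra_is_sigma_finite) unfold_locales
  have Xb[measurable]: "(\<lambda>w. real (X w)) \<in> borel_measurable M"
    using measurable_compose[OF Xm, of "\<lambda>n. real n" borel] by simp
  have g[measurable]: "(\<lambda>w. ennreal ((real (X w))\<^sup>2)) \<in> borel_measurable M" by measurable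
  have "(\<integral>\<^sup>+ w. ennreal ((real (X w))\<^sup>2) \<partial>M) = (\<integral>\<^sup>+ w. 1 * ennreal ((real (X w))\<^sup>2) \<partial>M)" by simp
  also have "\<dots> = (\<integral>\<^sup>+ w. 1 * nn_cond_exp M ?F (\<lambda>w. ennreal ((real (X w))\<^sup>2)) w \<partial>M)"
    by (rule sigma_finite_subalgebra.nn_cond_exp_intg[OF sfs, symmetric]) auto
  also have "\<dots> \<le> (\<integral>\<^sup>+ w. ennreal B \<partial>M)" using mom by (intro nn_integral_mono_AE) auto
  also have "\<dots> < \<infinity>" by (simp add: emeasure_space_1)
  finally have sq: "(\<integral>\<^sup>+ w. ennreal ((real (X w))\<^sup>2) \<partial>M) < \<infinity>" .
  have "(\<integral>\<^sup>+ w. ennreal (norm (real (X w))) \<partial>M) \<le> (\<integral>\<^sup>+ w. ennreal ((real (X w))\<^sup>2) \<partial>M)"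
  proof (intro nn_integral_mono)
    fix w
    have "real (X w) \<le> (real (X w))\<^sup>2"
    proof (cases "X w")
      case 0 then show ?thesis by simp
    next
      case (Suc n) then show ?thesis by (simp add: power2_eq_square)
    qed
    then show "ennreal (norm (real (X w))) \<le> ennreal ((real (X w))\<^sup>2)" by (simp add: ennreal_leI)
  qed
  then have "(\<integral>\<^sup>+ w. ennreal (norm (real (X w))) \<partial>M) < \<infinity>" using sq by (meson order.strict_trans1)
  then show ?thesis using Xb by (simp add: integrable_iff_bounded)
qed

definition Ssum :: "nat \<Rightarrow> (nat \<Rightarrow> nat) \<Rightarrow> real" where
  "Ssum n \<omega> = (\<Sum>j<n. real (\<omega> j))"

definition Bset :: "real \<Rightarrow> (nat \<Rightarrow> nat) set" where
  "Bset r = {\<omega>. \<exists>m::nat. \<forall>N::nat. \<exists>n\<ge>N. real n * (r + 1 / (real m + 1)) \<le> Ssum n \<omega>}"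

lemma Ssum_shift: "Ssum (Suc n) f = real (f 0) + Ssum n (\<lambda>t. f (Suc t))"
  unfolding Ssum_def by (subst sum.lessThan_Suc_shift) simp

lemma half_eq: "1 / (real (2*m+1) + 1) = (1 / (real m + 1)) / 2"
  by (simp add: field_simps)

lemma arith1:
  fixes a r c n :: real
  assumes "a > 0" "r \<ge> 0" "n * a / 2 \<ge> c"
  shows "n * (r + a) - c \<ge> (n - 1) * (r + a / 2)"
proof -
  have e: "n * (r + a) - c - (n - 1) * (r + a / 2) = r + a / 2 + (n * a / 2 - c)"
    by (simp add: field_simps)
  have "r + a / 2 + (n * a / 2 - c) \<ge> 0" using assms by simp
  then show ?thesis using e by simp
qed

lemma arith2:
  fixes a r c n :: real
  assumes "a > 0" "r \<ge> 0" "n \<ge> 2 * r / a + 1" "c \<ge> 0"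
  shows "c + n * (r + a) \<ge> (n + 1) * (r + a / 2)"
proof -
  have "n * a \<ge> (2 * r / a + 1) * a" using assms by (intro mult_right_mono) auto
  also have "(2 * r / a + 1) * a = 2 * r + a" using assms by (simp add: field_simps)
  finally have "n * a \<ge> 2 * r + a" .
  moreover have "(n + 1) * (r + a / 2) = n * r + n * a / 2 + r + a / 2" by (simp add: algebra_simps)
  moreover have "n * (r + a) = n * r + n * a" by (simp add: algebra_simps)
  ultimately show ?thesis using assms by linarith
qed

lemma Bset_inv:
  assumes r: "r \<ge> 0"
  shows "(\<lambda>t. f (Suc t)) \<in> Bset r \<longleftrightarrow> f \<in> Bset r"
proof
  assume "(\<lambda>t. f (Suc t)) \<in> Bset r"
  then obtain m where m: "\<And>N. \<exists>n\<ge>N. real n * (r + 1 / (real m + 1)) \<le> Ssum n (\<lambda>t. f (Suc t))"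
    unfolding Bset_def by blast
  define a where "a = 1 / (real m + 1)"
  have a: "a > 0" unfolding a_def by simp
  have "\<forall>N. \<exists>n\<ge>N. real n * (r + 1 / (real (2*m+1) + 1)) \<le> Ssum n f"
  proof
    fix N
    obtain K :: nat where K: "real K \<ge> 2 * r / a + 1" using real_arch_simple by blast
    obtain n where n: "n \<ge> N + K" "real n * (r + a) \<le> Ssum n (\<lambda>t. f (Suc t))"
      using m[of "N+K"] unfolding a_def by blast
    have "(real n + 1) * (r + a / 2) \<le> real (f 0) + real n * (r + a)"
      using arith2[OF a r, of "real n" "real (f 0)"] K n(1) by simp
    then have "real (Suc n) * (r + a / 2) \<le> real (f 0) + real n * (r + a)" by (metis of_nat_Suc add.commute)
    also have "\<dots> \<le> Ssum (Suc n) f" using n(2) Ssum_shift[of n f] by simp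
    moreover have eq: "1 / (real (2*m+1) + 1) = a / 2" unfolding a_def by (simp add: field_simps)
    ultimately show "\<exists>n\<ge>N. real n * (r + 1 / (real (2*m+1) + 1)) \<le> Ssum n f"
      unfolding eq using n(1) by (intro exI[of _ "Suc n"]) simp
  qed
  then show "f \<in> Bset r" unfolding Bset_def by blast
next
  assume "f \<in> Bset r"
  then obtain m where m: "\<And>N. \<exists>n\<ge>N. real n * (r + 1 / (real m + 1)) \<le> Ssum n f"
    unfolding Bset_def by blast
  define a where "a = 1 / (real m + 1)"
  have a: "a > 0" unfolding a_def by simp
  have "\<forall>N. \<exists>n\<ge>N. real n * (r + 1 / (real (2*m+1) + 1)) \<le> Ssum n (\<lambda>t. f (Suc t))"
  proof
    fix N
    obtain K :: nat where K: "real K \<ge> 2 * real (f 0) / a" using real_arch_simple by blast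
    obtain n' where n': "n' \<ge> Suc N + K" "real n' * (r + a) \<le> Ssum n' f"
      using m[of "Suc N + K"] unfolding a_def by blast
    obtain n where nn: "n' = Suc n" using n'(1) by (cases n') auto
    have ka: "real n' * a / 2 \<ge> real (f 0)"
    proof -
      have "real n' * a \<ge> (2 * real (f 0) / a) * a" using K n'(1) a by (intro mult_right_mono) auto
      also have "(2 * real (f 0) / a) * a = 2 * real (f 0)" using a by simp
      finally show ?thesis by simp
    qed
    have "(real n' - 1) * (r + a / 2) \<le> real n' * (r + a) - real (f 0)"
      using arith1[OF a r ka] .
    also have "\<dots> \<le> Ssum n' f - real (f 0)" using n'(2) by simp
    also have "\<dots> = Ssum n (\<lambda>t. f (Suc t))" using Ssum_shift[of n f] nn by simp
    moreover have eq: "1 / (real (2*m+1) + 1) = a / 2" unfolding a_def by (simp add: field_simps)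
    ultimately show "\<exists>n\<ge>N. real n * (r + 1 / (real (2*m+1) + 1)) \<le> Ssum n (\<lambda>t. f (Suc t))"
      unfolding eq using n'(1) nn by (intro exI[of _ n]) auto
  qed
  then show "(\<lambda>t. f (Suc t)) \<in> Bset r" unfolding Bset_def by blast
qed

lemma KW_sum:
  fixes x :: "nat \<Rightarrow> real" and r :: real and N :: nat
  assumes r: "r \<ge> 0" and x0: "\<And>k. x k \<ge> 0"
    and good: "\<And>k. x k \<ge> r \<or> (\<exists>n. 1 \<le> n \<and> n \<le> N \<and> (\<Sum>j<n. x (k+j)) \<ge> real n * r)"
  shows "(\<Sum>k<L. x k) \<ge> (real L - real N) * r"
proof -
  have main: "\<And>s. s \<le> L \<Longrightarrow> (\<Sum>k\<in>{s..<L}. x k) \<ge> (real L - real s - real N) * r"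
  proof -
    fix s assume "s \<le> L"
    then show "(\<Sum>k\<in>{s..<L}. x k) \<ge> (real L - real s - real N) * r"
    proof (induction "L - s" arbitrary: s rule: less_induct)
      case less
      show ?case
      proof (cases "s = L")
        case True then show ?thesis using r by (simp add: mult_nonpos_nonneg)
      next
        case False
        then have sL: "s < L" using less.prems by simp
        from good[of s] show ?thesis
        proof
          assume xs: "x s \<ge> r"
          have "(\<Sum>k\<in>{s..<L}. x k) = x s + (\<Sum>k\<in>{Suc s..<L}. x k)"
            using sL by (simp add: sum.atLeast_Suc_lessThan)
          moreover have "(\<Sum>k\<in>{Suc s..<L}. x k) \<ge> (real L - real (Suc s) - real N) * r"
            using less.hyps[of "Suc s"] sL by simp
          ultimately show ?thesis using xs by (simp add: algebra_simps)
        next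
          assume "\<exists>n. 1 \<le> n \<and> n \<le> N \<and> (\<Sum>j<n. x (s+j)) \<ge> real n * r"
          then obtain n where n: "1 \<le> n" "n \<le> N" "(\<Sum>j<n. x (s+j)) \<ge> real n * r" by blast
          show ?thesis
          proof (cases "s + n \<le> L")
            case True
            have split: "(\<Sum>k\<in>{s..<L}. x k) = (\<Sum>k\<in>{s..<s+n}. x k) + (\<Sum>k\<in>{s+n..<L}. x k)"
              using True by (simp add: sum.atLeastLessThan_concat)
            have "(\<Sum>k\<in>{s..<s+n}. x k) = (\<Sum>j<n. x (s+j))"
              by (rule sum.reindex_bij_witness[of _ "\<lambda>j. s+j" "\<lambda>k. k - s"]) auto
            moreover have "(\<Sum>k\<in>{s+n..<L}. x k) \<ge> (real L - real (s+n) - real N) * r"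
              using less.hyps[of "s+n"] True n(1) by simp
            ultimately show ?thesis using split n(3) by (simp add: algebra_simps)
          next
            case False
            have "(real L - real s - real N) * r \<le> 0"
              using False n r by (intro mult_nonpos_nonneg) auto
            also have "0 \<le> (\<Sum>k\<in>{s..<L}. x k)" using x0 by (simp add: sum_nonneg)
            finally show ?thesis .
          qed
        qed
      qed
    qed
  qed
  from main[of 0] show ?thesis by (simp add: atLeast0LessThan)
qed
lemma space_nat_seq[simp]: "space nat_seq_space = UNIV"
  by (simp add: nat_seq_space_def space_PiM)

lemma meas_coord[measurable]: "(\<lambda>\<omega>. \<omega> j) \<in> measurable nat_seq_space (count_space UNIV)"
  unfolding nat_seq_space_def by (rule measurable_component_singleton) simp

lemma meas_coord_real[measurable]: "(\<lambda>\<omega>. real (\<omega> j)) \<in> borel_measurable nat_seq_space"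
  using measurable_compose[OF meas_coord, of "\<lambda>n. real n" borel j] by simp

lemma meas_seq:
  assumes "\<And>t. X t \<in> measurable M (count_space UNIV)"
  shows "(\<lambda>w t. X t w) \<in> measurable M nat_seq_space"
  unfolding nat_seq_space_def
  by (rule measurable_PiM_single') (auto simp: assms)

lemma meas_shift[measurable]: "(\<lambda>\<omega> t. \<omega> (t + k)) \<in> measurable nat_seq_space nat_seq_space"
  unfolding nat_seq_space_def
  by (rule measurable_PiM_single') (auto intro: measurable_component_singleton)

lemma ergodic_upper:
  fixes M :: "'a measure" and X :: "nat \<Rightarrow> 'a \<Rightarrow> nat" and \<delta> :: real
  assumes M: "prob_space M"
    and Xm: "\<And>t. X t \<in> measurable M (count_space UNIV)"
    and stat: "stationary_process M X" and erg: "ergodic_process M X"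
    and int: "integrable M (\<lambda>w. real (X 0 w))"
    and d: "\<delta> > 0"
  shows "(\<lambda>n. measure M {w \<in> space M. real n * (prob_space.expectation M (\<lambda>w. real (X 0 w)) + \<delta>)
            \<le> (\<Sum>t<n. real (X t w))}) \<longlonglongrightarrow> 0"
proof -
  interpret prob_space M by (rule M)
  define lam where "lam = expectation (\<lambda>w. real (X 0 w))"
  have lam0: "lam \<ge> 0" unfolding lam_def by (rule integral_nonneg_AE) auto
  define r where "r = lam + \<delta> / 2"
  have r0: "r > 0" using lam0 d unfolding r_def by simp
  define Xs where "Xs = (\<lambda>w t. X t w)"
  have Xs_m[measurable]: "Xs \<in> measurable M nat_seq_space"
    unfolding Xs_def by (rule meas_seq[OF Xm])
  have Xk: "(\<lambda>w t. X (t + k) w) = (\<lambda>\<omega> t. \<omega> (t + k)) \<circ> Xs" for k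
    unfolding Xs_def by (simp add: comp_def)
  have shift_int: "(\<integral>w. g (\<lambda>t. X (t + k) w) \<partial>M) = (\<integral>w. g (Xs w) \<partial>M)"
    if g[measurable]: "g \<in> borel_measurable nat_seq_space" for g :: "(nat \<Rightarrow> nat) \<Rightarrow> real" and k
  proof -
    have m1: "(\<lambda>w t. X (t + k) w) \<in> measurable M nat_seq_space"
      unfolding Xk by (rule measurable_comp[OF Xs_m meas_shift])
    have "(\<integral>w. g (\<lambda>t. X (t + k) w) \<partial>M) = integral\<^sup>L (distr M nat_seq_space (\<lambda>w t. X (t + k) w)) g"
      by (rule integral_distr[symmetric, OF m1 g])
    also have "distr M nat_seq_space (\<lambda>w t. X (t + k) w) = distr M nat_seq_space Xs"
      using stat unfolding stationary_process_def Xs_def by simp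
    also have "integral\<^sup>L (distr M nat_seq_space Xs) g = (\<integral>w. g (Xs w) \<partial>M)"
      by (rule integral_distr[OF Xs_m g])
    finally show ?thesis .
  qed
  have B_sets: "Bset r \<in> sets nat_seq_space"
  proof -
    have "{\<omega> \<in> space nat_seq_space. \<exists>m::nat. \<forall>N::nat. \<exists>n\<ge>N. real n * (r + 1 / (real m + 1)) \<le> (\<Sum>j<n. real (\<omega> j))} \<in> sets nat_seq_space"
      by measurable
    then show ?thesis by (simp add: Bset_def Ssum_def)
  qed
  have B01: "measure M {w \<in> space M. Xs w \<in> Bset r} \<in> {0, 1}"
    using erg B_sets Bset_inv[of r] r0 unfolding ergodic_process_def Xs_def by auto
  have shift_intg: "integrable M (\<lambda>w. g (\<lambda>t. X (t + k) w)) \<longleftrightarrow> integrable M (\<lambda>w. g (Xs w))"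
    if g[measurable]: "g \<in> borel_measurable nat_seq_space" for g :: "(nat \<Rightarrow> nat) \<Rightarrow> real" and k
  proof -
    have m1: "(\<lambda>w t. X (t + k) w) \<in> measurable M nat_seq_space"
      unfolding Xk by (rule measurable_comp[OF Xs_m meas_shift])
    have "integrable M (\<lambda>w. g (\<lambda>t. X (t + k) w)) \<longleftrightarrow> integrable (distr M nat_seq_space (\<lambda>w t. X (t + k) w)) g"
      by (rule integrable_distr_eq[symmetric, OF m1 g])
    also have "distr M nat_seq_space (\<lambda>w t. X (t + k) w) = distr M nat_seq_space Xs"
      using stat unfolding stationary_process_def Xs_def by simp
    also have "integrable (distr M nat_seq_space Xs) g \<longleftrightarrow> integrable M (\<lambda>w. g (Xs w))"
      by (rule integrable_distr_eq[OF Xs_m g])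
    finally show ?thesis .
  qed
  define good where "good N \<omega> = (\<exists>n. 1 \<le> n \<and> n \<le> N \<and> real n * r \<le> Ssum n \<omega>)" for N \<omega>
  define ftil where "ftil N \<omega> = real (\<omega> 0) + r * of_bool (\<not> good N \<omega>)" for N \<omega>
  have ftil_m[measurable]: "ftil N \<in> borel_measurable nat_seq_space" for N
  proof -
    have "(\<lambda>\<omega>. real (\<omega> 0) + r * of_bool (\<not> (\<exists>n. 1 \<le> n \<and> n \<le> N \<and> real n * r \<le> (\<Sum>j<n. real (\<omega> j))))) \<in> borel_measurable nat_seq_space"
      by measurable
    then show ?thesis unfolding ftil_def good_def Ssum_def .
  qed
  have ftil_int: "integrable M (\<lambda>w. ftil N (Xs w))" for N
  proof -
    have "integrable M (\<lambda>w. r * of_bool (\<not> good N (Xs w)))"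
    proof (rule integrable_const_bound[where B = r])
      show "AE x in M. norm (r * of_bool (\<not> good N (Xs x))) \<le> r" using r0 by auto
      have "(\<lambda>\<omega>. r * of_bool (\<not> good N \<omega>)) \<in> borel_measurable nat_seq_space"
      proof -
        have "(\<lambda>\<omega>. r * of_bool (\<not> (\<exists>n. 1 \<le> n \<and> n \<le> N \<and> real n * r \<le> (\<Sum>j<n. real (\<omega> j))))) \<in> borel_measurable nat_seq_space"
          by measurable
        then show ?thesis unfolding good_def Ssum_def .
      qed
      then show "(\<lambda>x. r * of_bool (\<not> good N (Xs x))) \<in> borel_measurable M"
        using Xs_m by measurable
    qed
    moreover have "integrable M (\<lambda>w. real (Xs w 0))" using int unfolding Xs_def by simp
    ultimately show ?thesis unfolding ftil_def by (intro Bochner_Integration.integrable_add)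
  qed
  define p where "p N = measure M {w \<in> space M. \<not> good N (Xs w)}" for N
  have G_sets: "{w \<in> space M. \<not> good N (Xs w)} \<in> sets M" for N
  proof -
    have "{w \<in> space M. \<not> (\<exists>n. 1 \<le> n \<and> n \<le> N \<and> real n * r \<le> (\<Sum>j<n. real (Xs w j)))} \<in> sets M"
      by measurable
    then show ?thesis unfolding good_def Ssum_def .
  qed
  have Ef: "(\<integral>w. ftil N (Xs w) \<partial>M) = lam + r * p N" for N
  proof -
    have "(\<integral>w. ftil N (Xs w) \<partial>M) = (\<integral>w. real (X 0 w) \<partial>M) + (\<integral>w. r * indicator {w \<in> space M. \<not> good N (Xs w)} w \<partial>M)"
    proof -
      have "(\<integral>w. ftil N (Xs w) \<partial>M) = (\<integral>w. real (X 0 w) + r * indicator {w \<in> space M. \<not> good N (Xs w)} w \<partial>M)"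
        by (intro Bochner_Integration.integral_cong) (simp_all add: ftil_def Xs_def split: split_indicator)
      also have "\<dots> = (\<integral>w. real (X 0 w) \<partial>M) + (\<integral>w. r * indicator {w \<in> space M. \<not> good N (Xs w)} w \<partial>M)"
        using int G_sets[of N] by (intro Bochner_Integration.integral_add integrable_mult_right integrable_real_indicator) (simp_all add: less_top[symmetric])
      finally show ?thesis .
    qed
    also have "(\<integral>w. r * indicator {w \<in> space M. \<not> good N (Xs w)} w \<partial>M) = r * p N"
      unfolding p_def using G_sets[of N] by simp
    finally show ?thesis unfolding lam_def by simp
  qed
  have KWw: "(real L - real N) * r \<le> (\<Sum>k<L. ftil N (\<lambda>t. X (t + k) w))" for L N w
  proof (rule KW_sum)
    show "0 \<le> r" using r0 by simp
    show "0 \<le> ftil N (\<lambda>t. X (t + k) w)" for k unfolding ftil_def using r0 by simp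
    fix k
    show "r \<le> ftil N (\<lambda>t. X (t + k) w) \<or> (\<exists>n. 1 \<le> n \<and> n \<le> N \<and> real n * r \<le> (\<Sum>j<n. ftil N (\<lambda>t. X (t + (k + j)) w)))"
    proof (cases "good N (\<lambda>t. X (t + k) w)")
      case False then show ?thesis unfolding ftil_def by simp
    next
      case True
      then obtain n where n: "1 \<le> n" "n \<le> N" "real n * r \<le> Ssum n (\<lambda>t. X (t + k) w)"
        unfolding good_def by blast
      have "Ssum n (\<lambda>t. X (t + k) w) \<le> (\<Sum>j<n. ftil N (\<lambda>t. X (t + (k + j)) w))"
        unfolding Ssum_def ftil_def using r0 by (intro sum_mono) (simp add: add.commute)
      then show ?thesis using n by (intro disjI2 exI[of _ n]) simp
    qed
  qed
  have ineq: "(real L - real N) * r \<le> real L * (lam + r * p N)" for L N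
  proof -
    have "(real L - real N) * r = (\<integral>w. (real L - real N) * r \<partial>M)" by (simp add: prob_space)
    also have "\<dots> \<le> (\<integral>w. (\<Sum>k<L. ftil N (\<lambda>t. X (t + k) w)) \<partial>M)"
    proof (rule integral_mono)
      show "integrable M (\<lambda>w. (real L - real N) * r)" by simp
      show "integrable M (\<lambda>w. \<Sum>k<L. ftil N (\<lambda>t. X (t + k) w))"
        by (intro Bochner_Integration.integrable_sum) (simp add: shift_intg[OF ftil_m] ftil_int)
      show "(real L - real N) * r \<le> (\<Sum>k<L. ftil N (\<lambda>t. X (t + k) w))" for w by (rule KWw)
    qed
    also have "\<dots> = (\<Sum>k<L. (\<integral>w. ftil N (\<lambda>t. X (t + k) w) \<partial>M))"
      by (intro Bochner_Integration.integral_sum) (simp add: shift_intg[OF ftil_m] ftil_int)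
    also have "\<dots> = (\<Sum>k<L. lam + r * p N)"
      using shift_int[OF ftil_m] Ef by simp
    finally show ?thesis by simp
  qed
  have ge: "lam + r * p N \<ge> r" for N
  proof (rule ccontr)
    assume "\<not> ?thesis"
    then have dpos: "r - lam - r * p N > 0" by simp
    obtain L :: nat where L: "real L > real N * r / (r - lam - r * p N)" using reals_Archimedean2 by blast
    then have "real L * (r - lam - r * p N) > real N * r" using dpos by (simp add: field_simps)
    then show False using ineq[of L N] by (simp add: algebra_simps)
  qed
  have B1: "measure M {w \<in> space M. Xs w \<in> Bset r} \<noteq> 1"
  proof
    assume one: "measure M {w \<in> space M. Xs w \<in> Bset r} = 1"
    have Bm: "{w \<in> space M. Xs w \<in> Bset r} \<in> sets M" using B_sets Xs_m by measurable
    have compl0: "measure M {w \<in> space M. Xs w \<notin> Bset r} = 0"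
    proof -
      have "{w \<in> space M. Xs w \<notin> Bset r} = space M - {w \<in> space M. Xs w \<in> Bset r}" by auto
      then show ?thesis using prob_compl[OF Bm] one by simp
    qed
    have "decseq (\<lambda>N. {w \<in> space M. \<not> good N (Xs w)})"
      unfolding decseq_def good_def by auto
    then have limp: "p \<longlonglongrightarrow> measure M (\<Inter>N. {w \<in> space M. \<not> good N (Xs w)})"
      unfolding p_def using G_sets by (intro finite_Lim_measure_decseq) auto
    have "(\<Inter>N. {w \<in> space M. \<not> good N (Xs w)}) \<subseteq> {w \<in> space M. Xs w \<notin> Bset r}"
    proof safe
      fix w assume w: "w \<in> (\<Inter>N. {w \<in> space M. \<not> good N (Xs w)})" "Xs w \<in> Bset r"
      then obtain m where "\<forall>N. \<exists>n\<ge>N. real n * (r + 1 / (real m + 1)) \<le> Ssum n (Xs w)"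
        unfolding Bset_def by blast
      then obtain n where n: "n \<ge> 1" "real n * (r + 1 / (real m + 1)) \<le> Ssum n (Xs w)" by blast
      have "real n * r \<le> real n * (r + 1 / (real m + 1))" by (intro mult_left_mono) auto
      then have "real n * r \<le> Ssum n (Xs w)" using n(2) by linarith
      then have "good n (Xs w)" unfolding good_def using n(1) by (intro exI[of _ n]) auto
      then show False using w by auto
    qed auto
    moreover have "{w \<in> space M. Xs w \<notin> Bset r} \<in> sets M" using B_sets Xs_m by measurable
    ultimately have "measure M (\<Inter>N. {w \<in> space M. \<not> good N (Xs w)}) \<le> measure M {w \<in> space M. Xs w \<notin> Bset r}"
      by (rule finite_measure_mono)
    then have "measure M (\<Inter>N. {w \<in> space M. \<not> good N (Xs w)}) \<le> 0" using compl0 by simp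
    then have "measure M (\<Inter>N. {w \<in> space M. \<not> good N (Xs w)}) = 0"
      using measure_nonneg[of M] by (meson order.antisym)
    then have "p \<longlonglongrightarrow> 0" using limp by simp
    then have "(\<lambda>N. lam + r * p N) \<longlonglongrightarrow> lam + r * 0"
      by (intro tendsto_intros)
    then have "r \<le> lam + r * 0" using ge by (intro LIMSEQ_le_const) auto
    then show False unfolding r_def using d by simp
  qed
  have B0: "measure M {w \<in> space M. Xs w \<in> Bset r} = 0" using B01 B1 by auto
  define D where "D n = {w \<in> space M. \<exists>m\<ge>n. real m * (lam + \<delta>) \<le> Ssum m (Xs w)}" for n
  have D_sets: "D n \<in> sets M" for n
  proof -
    have "{w \<in> space M. \<exists>m\<ge>n. real m * (lam + \<delta>) \<le> (\<Sum>j<m. real (Xs w j))} \<in> sets M"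
      by measurable
    then show ?thesis unfolding D_def Ssum_def .
  qed
  have "decseq D" unfolding decseq_def D_def by (auto intro: order_trans)
  then have lim: "(\<lambda>n. measure M (D n)) \<longlonglongrightarrow> measure M (\<Inter>n. D n)"
    using D_sets by (intro finite_Lim_measure_decseq) auto
  obtain m0 :: nat where m0: "1 / (real m0 + 1) \<le> \<delta> / 2"
  proof -
    obtain m0 :: nat where "2 / \<delta> \<le> real m0" using real_arch_simple by blast
    then have "2 / \<delta> \<le> real m0 + 1" by simp
    then have "1 / (real m0 + 1) \<le> \<delta> / 2" using d by (simp add: field_simps)
    then show ?thesis using that by blast
  qed
  have "(\<Inter>n. D n) \<subseteq> {w \<in> space M. Xs w \<in> Bset r}"
  proof
    fix w assume w: "w \<in> (\<Inter>n. D n)"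
    then have ws: "w \<in> space M" unfolding D_def by auto
    have "\<forall>N. \<exists>n\<ge>N. real n * (r + 1 / (real m0 + 1)) \<le> Ssum n (Xs w)"
    proof
      fix N
      from w have "w \<in> D N" by auto
      then obtain n where n: "n \<ge> N" "real n * (lam + \<delta>) \<le> Ssum n (Xs w)" unfolding D_def by auto
      have "real n * (r + 1 / (real m0 + 1)) \<le> real n * (lam + \<delta>)"
        using m0 unfolding r_def by (intro mult_left_mono) auto
      then show "\<exists>n\<ge>N. real n * (r + 1 / (real m0 + 1)) \<le> Ssum n (Xs w)" using n by (intro exI[of _ n]) auto
    qed
    then show "w \<in> {w \<in> space M. Xs w \<in> Bset r}" using ws unfolding Bset_def by blast
  qed
  then have "measure M (\<Inter>n. D n) \<le> 0"
    using B0 finite_measure_mono[of "\<Inter>n. D n" "{w \<in> space M. Xs w \<in> Bset r}"] B_sets Xs_m by (simp add: measurable_sets)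
  then have "measure M (\<Inter>n. D n) = 0" using measure_nonneg[of M] by (meson order.antisym)
  then have limD: "(\<lambda>n. measure M (D n)) \<longlonglongrightarrow> 0" using lim by simp
  show ?thesis
  proof (rule tendsto_sandwich[OF _ _ tendsto_const limD])
    show "\<forall>\<^sub>F n in sequentially. 0 \<le> measure M {w \<in> space M. real n * (expectation (\<lambda>w. real (X 0 w)) + \<delta>) \<le> (\<Sum>t<n. real (X t w))}"
      by simp
    show "\<forall>\<^sub>F n in sequentially. measure M {w \<in> space M. real n * (expectation (\<lambda>w. real (X 0 w)) + \<delta>) \<le> (\<Sum>t<n. real (X t w))} \<le> measure M (D n)"
    proof (intro always_eventually allI finite_measure_mono)
      fix n
      show "{w \<in> space M. real n * (expectation (\<lambda>w. real (X 0 w)) + \<delta>) \<le> (\<Sum>t<n. real (X t w))} \<subseteq> D n"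
        unfolding D_def lam_def Ssum_def Xs_def by auto
      show "D n \<in> sets M" by (rule D_sets)
    qed
  qed
qed

lemma real_comp_meas:
  fixes X :: "'a \<Rightarrow> nat"
  assumes "X \<in> measurable M (count_space UNIV)"
  shows "(\<lambda>w. real (X w)) \<in> borel_measurable M"
  by (rule measurable_compose[OF assms]) simp

lemma queue_incl:
  assumes V: "V \<ge> 0" and U: "V < real (stat_U C L S A (Suc t) i j w)"
  shows "V < real (A t i j w) \<or>
    (\<Sum>\<tau><Suc t. real (stat_R C L S \<tau> i j w)) < (\<Sum>\<tau><Suc t. real (A \<tau> i j w))"
proof (cases "stat_U C L S A (Suc t) i j w > A t i j w")
  case False
  then show ?thesis using U by linarith
next
  case True
  have E0: "stat_E C L S A (Suc t) i j w = 0" by (rule UE_E0[OF True])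
  have "int (stat_U C L S A (Suc t) i j w) - int (stat_E C L S A (Suc t) i j w)
     = (\<Sum>\<tau><Suc t. int (A \<tau> i j w) - int (stat_R C L S \<tau> i j w))" by (rule UE_net)
  then have "real_of_int (int (stat_U C L S A (Suc t) i j w))
     = real_of_int (\<Sum>\<tau><Suc t. int (A \<tau> i j w) - int (stat_R C L S \<tau> i j w))" using E0 by simp
  then have "real (stat_U C L S A (Suc t) i j w) = (\<Sum>\<tau><Suc t. real (A \<tau> i j w)) - (\<Sum>\<tau><Suc t. real (stat_R C L S \<tau> i j w))"
    by (simp add: of_int_sum sum_subtractf)
  then show ?thesis using U V by linarith
qed

lemma pair_stable:
  fixes M :: "'a measure" and Kn :: nat
    and p :: "nat \<Rightarrow> real" and q :: real and lam :: "nat \<Rightarrow> nat \<Rightarrow> real"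
    and eps :: real and Amax :: real and ft :: "nat \<Rightarrow> nat \<Rightarrow> real"
    and C :: "nat \<Rightarrow> nat \<Rightarrow> 'a \<Rightarrow> bool" and L :: "nat \<Rightarrow> nat \<Rightarrow> 'a \<Rightarrow> nat"
    and S :: "nat \<Rightarrow> nat \<Rightarrow> nat \<Rightarrow> nat \<Rightarrow> 'a \<Rightarrow> bool"
    and A :: "nat \<Rightarrow> nat \<Rightarrow> nat \<Rightarrow> 'a \<Rightarrow> nat"
  assumes M: "prob_space M"
    and p: "\<forall>i \<in> nodes Kn. 0 \<le> p i \<and> p i \<le> 1"
    and q: "0 \<le> q" "q \<le> 1"
    and src_indep: "prob_space.indep_vars M (\<lambda>_. count_space UNIV) (src_var C L S) (src_index Kn)"
    and C_law: "\<forall>t. \<forall>i \<in> nodes Kn. measure M {w \<in> space M. C t i w} = p i"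
    and S_law: "\<forall>t k. \<forall>(i, j) \<in> upairs Kn. measure M {w \<in> space M. S t i j k w} = q"
    and eps: "eps > 0"
    and ft_sym: "\<forall>i j. ft i j = ft j i \<and> 0 \<le> ft i j"
    and ft_cap: "\<forall>j \<in> nodes Kn. (\<Sum>i \<in> nodes Kn - {j}. ft i j) \<le> p j"
    and ft_rate: "\<forall>i \<in> nodes Kn. \<forall>j \<in> nodes Kn. i \<noteq> j \<longrightarrow> lam i j + eps \<le> q * ft i j"
    and L_law: "\<forall>t. \<forall>i \<in> nodes Kn. \<forall>j \<in> nodes Kn. i \<noteq> j \<longrightarrow>
                  measure M {w \<in> space M. L t i w = j} = ft i j / p i"
    and A_meas: "\<forall>t. \<forall>(i, j) \<in> upairs Kn. A t i j \<in> measurable M (count_space UNIV)"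
    and A_stat: "\<forall>(i, j) \<in> upairs Kn. stationary_process M (\<lambda>t. A t i j)"
    and A_erg: "\<forall>(i, j) \<in> upairs Kn. ergodic_process M (\<lambda>t. A t i j)"
    and lam_def: "\<forall>i \<in> nodes Kn. \<forall>j \<in> nodes Kn. i \<noteq> j \<longrightarrow>
                   lam i j = prob_space.expectation M (\<lambda>w. real (A 0 i j w))"
    and A_mom: "\<forall>t. \<forall>i \<in> nodes Kn. \<forall>j \<in> nodes Kn. i \<noteq> j \<longrightarrow>
                  (AE w in M. nn_cond_exp M (stat_hist M Kn C L S A t)
                     (\<lambda>w. ennreal ((real (A t i j w))\<^sup>2)) w \<le> ennreal (Amax\<^sup>2))"
    and ij: "(i, j) \<in> upairs Kn"
  shows "((\<lambda>V::real. limsup (\<lambda>t::nat. ereal ((1 / real t) *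
         (\<Sum>tau<t. measure M {w \<in> space M. real (stat_U C L S A tau i j w) > V})))) \<longlongrightarrow> 0) at_top"
proof -
  interpret prob_space M by (rule M)
  have ijn: "i \<in> nodes Kn" "j \<in> nodes Kn" "i < j" using ij unfolding upairs_def by auto
  have fin: "finite (nodes Kn)" unfolding nodes_def by simp
  define f where "f = ft i j"
  define lamij where "lamij = lam i j"
  have lam_eq: "lamij = expectation (\<lambda>w. real (A 0 i j w))" using lam_def ijn unfolding lamij_def by auto
  have lam0: "lamij \<ge> 0" unfolding lam_eq by (rule integral_nonneg_AE) auto
  have rate: "lamij + eps \<le> q * f" using ft_rate ijn unfolding lamij_def f_def by auto
  have fpos: "f > 0"
  proof (rule ccontr)
    assume "\<not> f > 0" then have "q * f \<le> 0" using q by (simp add: mult_nonneg_nonpos)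
    then show False using rate lam0 eps by linarith
  qed
  have pi: "f \<le> p i"
  proof -
    have "ft j i \<le> (\<Sum>i' \<in> nodes Kn - {i}. ft i' i)"
      using fin ijn ft_sym by (intro member_le_sum) auto
    also have "\<dots> \<le> p i" using ft_cap ijn by auto
    finally show ?thesis using ft_sym unfolding f_def by metis
  qed
  have pj: "f \<le> p j"
  proof -
    have "ft i j \<le> (\<Sum>i' \<in> nodes Kn - {j}. ft i' j)"
      using fin ijn ft_sym by (intro member_le_sum) auto
    also have "\<dots> \<le> p j" using ft_cap ijn by auto
    finally show ?thesis unfolding f_def .
  qed
  have pipos: "p i > 0" and pjpos: "p j > 0" using pi pj fpos by linarith+
  have arr_i: "measure M {w \<in> space M. C t i w} * measure M {w \<in> space M. L t i w = j} = f" for t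
  proof -
    have "measure M {w \<in> space M. C t i w} = p i" using C_law ijn by blast
    moreover have "measure M {w \<in> space M. L t i w = j} = ft i j / p i" using L_law ijn by auto
    ultimately show ?thesis using pipos unfolding f_def by simp
  qed
  have arr_j: "measure M {w \<in> space M. C t j w} * measure M {w \<in> space M. L t j w = i} = f" for t
  proof -
    have "measure M {w \<in> space M. C t j w} = p j" using C_law ijn by blast
    moreover have "measure M {w \<in> space M. L t j w = i} = ft j i / p j" using L_law ijn by auto
    moreover have "ft j i = ft i j" using ft_sym by metis
    ultimately show ?thesis using pjpos unfolding f_def by simp
  qed
  have "p i \<le> 1" using p ijn(1) by blast
  then have f1: "f \<le> 1" using pi by linarith
  have Sl: "measure M {w \<in> space M. S t i j k w} = q" for t k using S_law ij by blast
  have f0: "0 \<le> f" using fpos by simp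
  have swpf: "swp M Kn C L S i j q f"
    by (rule swp.intro[OF M swp_axioms.intro[OF src_indep ij q(1) q(2) Sl arr_i arr_j f0 f1]])
  have Xm: "A t i j \<in> measurable M (count_space UNIV)" for t using bspec[OF spec[OF A_meas, of t] ij] by (simp only: case_prod_conv)
  have hist0: "stat_hist M Kn C L S A 0 = sigma (space M) {}"
    unfolding stat_hist_def gen_sigma_def by simp
  have int: "integrable M (\<lambda>w. real (A 0 i j w))"
  proof -
    have "i \<noteq> j" using ijn by simp
    then have "AE w in M. nn_cond_exp M (stat_hist M Kn C L S A 0) (\<lambda>w. ennreal ((real (A 0 i j w))\<^sup>2)) w \<le> ennreal (Amax\<^sup>2)"
      using A_mom ijn(1,2) by blast
    then have mom0: "AE w in M. nn_cond_exp M (sigma (space M) {}) (\<lambda>w. ennreal ((real (A 0 i j w))\<^sup>2)) w \<le> ennreal (Amax\<^sup>2)"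
      unfolding hist0 .
    show ?thesis by (rule A0_int[OF M Xm mom0])
  qed
  have erglim: "(\<lambda>n. measure M {w \<in> space M. real n * (lamij + eps / 3) \<le> (\<Sum>t<n. real (A t i j w))}) \<longlonglongrightarrow> 0"
  proof -
    have st: "stationary_process M (\<lambda>t. A t i j)" using bspec[OF A_stat ij] by (simp only: case_prod_conv)
    have er: "ergodic_process M (\<lambda>t. A t i j)" using bspec[OF A_erg ij] by (simp only: case_prod_conv)
    have e3: "eps / 3 > 0" using eps by simp
    show ?thesis using ergodic_upper[OF M Xm st er int e3] unfolding lam_eq .
  qed
  define c0 where "c0 = 36 / eps\<^sup>2 + 2 * (12 * q / eps)\<^sup>2"
  define m2 where "m2 n = measure M {w \<in> space M. (\<Sum>\<tau><n. real (stat_R C L S \<tau> i j w)) < real n * (lamij + eps / 3)}" for n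
  have m2lim: "m2 \<longlonglongrightarrow> 0"
  proof (rule tendsto_sandwich[OF _ _ tendsto_const])
    show "\<forall>\<^sub>F n in sequentially. 0 \<le> m2 n" unfolding m2_def by simp
    obtain N :: nat where N: "real N \<ge> 4 / eps" using real_arch_simple by blast
    show "\<forall>\<^sub>F n in sequentially. m2 n \<le> c0 / real n"
    proof (rule eventually_sequentiallyI[of N])
      fix n assume n: "n \<ge> N"
      have "real n * eps \<ge> 4"
      proof -
        have "real n \<ge> 4 / eps" using N n by linarith
        then show ?thesis using eps by (simp add: field_simps)
      qed
      from swp.R_low[OF swpf lam0 rate eps this] show "m2 n \<le> c0 / real n" unfolding m2_def c0_def .
    qed
    show "(\<lambda>n. c0 / real n) \<longlonglongrightarrow> 0" by (rule lim_const_over_n)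
  qed
  define m1 where "m1 n = measure M {w \<in> space M. real n * (lamij + eps / 3) \<le> (\<Sum>t<n. real (A t i j w))}" for n
  define e where "e n = (if n = 0 then 0 else m1 n + m2 n)" for n
  have elim: "e \<longlonglongrightarrow> 0"
  proof -
    have "(\<lambda>n. m1 n + m2 n) \<longlonglongrightarrow> 0 + 0" using erglim m2lim unfolding m1_def by (intro tendsto_add)
    then have "(\<lambda>n. m1 n + m2 n) \<longlonglongrightarrow> 0" by simp
    from LIMSEQ_Suc[OF this] have "(\<lambda>n. m1 (Suc n) + m2 (Suc n)) \<longlonglongrightarrow> 0" by simp
    then have "(\<lambda>n. e (Suc n)) \<longlonglongrightarrow> 0" unfolding e_def by simp
    then show ?thesis by (rule LIMSEQ_imp_Suc)
  qed
  define h where "h V = measure M {w \<in> space M. V < real (A 0 i j w)}" for V :: real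
  have Xs_m: "(\<lambda>w s. A (s + t) i j w) \<in> measurable M nat_seq_space" for t
    by (rule meas_seq) (simp add: Xm)
  have hshift: "measure M {w \<in> space M. V < real (A t i j w)} = h V" for t V
  proof -
    have Sset: "{\<omega>. V < real (\<omega> 0)} \<in> sets nat_seq_space"
    proof -
      have "{\<omega> \<in> space nat_seq_space. V < real (\<omega> 0)} \<in> sets nat_seq_space" by measurable
      then show ?thesis by simp
    qed
    have dd: "distr M nat_seq_space (\<lambda>w s. A (s + t) i j w) = distr M nat_seq_space (\<lambda>w s. A (s + 0) i j w)"
      using A_stat ij unfolding stationary_process_def by auto
    have pre: "(\<lambda>w s. A (s + t') i j w) -` {\<omega>. V < real (\<omega> 0)} \<inter> space M = {w \<in> space M. V < real (A t' i j w)}" for t'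
      by auto
    have "measure M {w \<in> space M. V < real (A t i j w)} = measure (distr M nat_seq_space (\<lambda>w s. A (s + t) i j w)) {\<omega>. V < real (\<omega> 0)}"
      unfolding measure_distr[OF Xs_m Sset] pre ..
    also have "\<dots> = measure (distr M nat_seq_space (\<lambda>w s. A (s + 0) i j w)) {\<omega>. V < real (\<omega> 0)}" using dd by simp
    also have "\<dots> = h V" unfolding h_def measure_distr[OF Xs_m Sset] pre ..
    finally show ?thesis .
  qed
  define u where "u V \<tau> = measure M {w \<in> space M. real (stat_U C L S A \<tau> i j w) > V}" for V \<tau>
  have ubound: "u V \<tau> \<le> e \<tau> + h V" if V: "V \<ge> 0" for V \<tau>
  proof (cases \<tau>)
    case 0
    have "u V \<tau> = 0" unfolding u_def 0 using V by (simp add: stat_U_def)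
    moreover have "e \<tau> = 0" unfolding e_def 0 by simp
    moreover have "h V \<ge> 0" unfolding h_def by simp
    ultimately show ?thesis by simp
  next
    case (Suc t)
    let ?c = "real (Suc t) * (lamij + eps / 3)"
    let ?B1 = "{w \<in> space M. ?c \<le> (\<Sum>s<Suc t. real (A s i j w))}"
    let ?B2 = "{w \<in> space M. (\<Sum>s<Suc t. real (stat_R C L S s i j w)) < ?c}"
    let ?B3 = "{w \<in> space M. V < real (A t i j w)}"
    have sub: "{w \<in> space M. real (stat_U C L S A \<tau> i j w) > V} \<subseteq> ?B1 \<union> ?B2 \<union> ?B3"
    proof
      fix w assume w: "w \<in> {w \<in> space M. real (stat_U C L S A \<tau> i j w) > V}"
      then have "V < real (A t i j w) \<or>
        (\<Sum>s<Suc t. real (stat_R C L S s i j w)) < (\<Sum>s<Suc t. real (A s i j w))"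
        using queue_incl[OF V, where C=C and L=L and S=S and A=A and t=t and i=i and j=j and w=w] w unfolding Suc by blast
      then show "w \<in> ?B1 \<union> ?B2 \<union> ?B3" using w by auto
    qed
    have Ab: "(\<lambda>w. real (A s i j w)) \<in> borel_measurable M" for s
      by (rule real_comp_meas[OF Xm])
    have SAb: "(\<lambda>w. \<Sum>s<Suc t. real (A s i j w)) \<in> borel_measurable M"
      by (intro borel_measurable_sum Ab)
    have B1m: "?B1 \<in> sets M" by (rule borel_measurable_le[OF borel_measurable_const SAb])
    have B2m: "?B2 \<in> sets M" by (rule borel_measurable_less[OF swp.SR_meas[OF swpf] borel_measurable_const])
    have B3m: "?B3 \<in> sets M" by (rule borel_measurable_less[OF borel_measurable_const Ab])
    have "u V \<tau> \<le> measure M ?B1 + measure M ?B2 + measure M ?B3"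
      unfolding u_def by (rule swp.measure_le3[OF swpf sub B1m B2m B3m])
    also have "\<dots> = e \<tau> + h V"
      unfolding e_def m1_def m2_def Suc hshift by simp
    finally show ?thesis .
  qed
  have e0: "e n \<ge> 0" for n unfolding e_def m1_def m2_def by simp
  have lb: "0 \<le> limsup (\<lambda>t. ereal ((1 / real t) * (\<Sum>\<tau><t. u V \<tau>)))"
    and ub: "limsup (\<lambda>t. ereal ((1 / real t) * (\<Sum>\<tau><t. u V \<tau>))) \<le> ereal (h V)" if V0: "V \<ge> 0" for V
  proof -
    have u0: "0 \<le> u V t" for t unfolding u_def by (rule measure_nonneg)
    have h0: "0 \<le> h V" unfolding h_def by (rule measure_nonneg)
    show "0 \<le> limsup (\<lambda>t. ereal ((1 / real t) * (\<Sum>\<tau><t. u V \<tau>)))"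
      by (rule limsup_bound(1)[OF u0 ubound[OF V0] elim h0])
    show "limsup (\<lambda>t. ereal ((1 / real t) * (\<Sum>\<tau><t. u V \<tau>))) \<le> ereal (h V)"
      by (rule limsup_bound(2)[OF u0 ubound[OF V0] elim h0])
  qed
  have hlim: "(h \<longlongrightarrow> 0) at_top"
  proof (rule tendsto_sandwich[OF _ _ tendsto_const])
    show "\<forall>\<^sub>F V in at_top. 0 \<le> h V" unfolding h_def by simp
    show "\<forall>\<^sub>F V in at_top. h V \<le> lamij / V"
      using eventually_gt_at_top[of "0::real"]
    proof eventually_elim
      case (elim V)
      have "h V \<le> measure M {w \<in> space M. V \<le> real (A 0 i j w)}"
        unfolding h_def by (rule finite_measure_mono[OF _ borel_measurable_le[OF borel_measurable_const real_comp_meas[OF Xm]]]) auto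
      also have "\<dots> \<le> (\<integral>w. real (A 0 i j w) \<partial>M) / V"
        by (rule integral_Markov_inequality_measure[OF int sets.top]) (simp_all add: elim)
      finally show ?case unfolding lam_eq .
    qed
    show "((\<lambda>V. lamij / V) \<longlongrightarrow> 0) at_top"
      by (intro tendsto_divide_0[OF tendsto_const] filterlim_at_top_imp_at_infinity filterlim_ident)
  qed
  have ueq: "(\<Sum>tau<t. measure M {w \<in> space M. real (stat_U C L S A tau i j w) > V}) = (\<Sum>\<tau><t. u V \<tau>)" for V t
    unfolding u_def ..
  show ?thesis
  proof (rule tendsto_sandwich[where f="\<lambda>_. 0" and h="\<lambda>V. ereal (h V)"])
    show "\<forall>\<^sub>F V in at_top. 0 \<le> limsup (\<lambda>t. ereal ((1 / real t) * (\<Sum>tau<t. measure M {w \<in> space M. real (stat_U C L S A tau i j w) > V})))"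
      unfolding ueq using eventually_ge_at_top[of "0::real"] by (rule eventually_mono) (rule lb)
    show "\<forall>\<^sub>F V in at_top. limsup (\<lambda>t. ereal ((1 / real t) * (\<Sum>tau<t. measure M {w \<in> space M. real (stat_U C L S A tau i j w) > V}))) \<le> ereal (h V)"
      unfolding ueq using eventually_ge_at_top[of "0::real"] by (rule eventually_mono) (rule ub)
    show "((\<lambda>_. 0::ereal) \<longlongrightarrow> 0) at_top" by (rule tendsto_const)
    show "((\<lambda>V. ereal (h V)) \<longlongrightarrow> 0) at_top" using hlim unfolding zero_ereal_def by (simp only: lim_ereal)
  qed
qed

theorem corollary1:
  fixes M :: "'a measure" and Kn :: nat
    and p :: "nat \<Rightarrow> real" and q :: real and lam :: "nat \<Rightarrow> nat \<Rightarrow> real"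
    and eps :: real and Amax :: real and ft :: "nat \<Rightarrow> nat \<Rightarrow> real"
    and C :: "nat \<Rightarrow> nat \<Rightarrow> 'a \<Rightarrow> bool" and L :: "nat \<Rightarrow> nat \<Rightarrow> 'a \<Rightarrow> nat"
    and S :: "nat \<Rightarrow> nat \<Rightarrow> nat \<Rightarrow> nat \<Rightarrow> 'a \<Rightarrow> bool"
    and A :: "nat \<Rightarrow> nat \<Rightarrow> nat \<Rightarrow> 'a \<Rightarrow> nat"
  assumes M: "prob_space M"
    and p: "\<forall>i \<in> nodes Kn. 0 \<le> p i \<and> p i \<le> 1"
    and q: "0 \<le> q" "q \<le> 1"
    \<comment> \<open>generation, labelling and swap-outcome randomness: measurable, independent, with given laws\<close>
    and C_meas: "\<forall>t. \<forall>i \<in> nodes Kn. C t i \<in> measurable M (count_space UNIV)"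
    and L_meas: "\<forall>t. \<forall>i \<in> nodes Kn. L t i \<in> measurable M (count_space UNIV)"
    and S_meas: "\<forall>t k. \<forall>(i, j) \<in> upairs Kn. S t i j k \<in> measurable M (count_space UNIV)"
    and src_indep: "prob_space.indep_vars M (\<lambda>_. count_space UNIV) (src_var C L S) (src_index Kn)"
    and C_law: "\<forall>t. \<forall>i \<in> nodes Kn. measure M {w \<in> space M. C t i w} = p i"
    and S_law: "\<forall>t k. \<forall>(i, j) \<in> upairs Kn. measure M {w \<in> space M. S t i j k w} = q"
    \<comment> \<open>protocol parameters f~ and the labelling law\<close>
    and eps: "eps > 0"
    and ft_sym: "\<forall>i j. ft i j = ft j i \<and> 0 \<le> ft i j"
    and ft_cap: "\<forall>j \<in> nodes Kn. (\<Sum>i \<in> nodes Kn - {j}. ft i j) \<le> p j"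
    and ft_rate: "\<forall>i \<in> nodes Kn. \<forall>j \<in> nodes Kn. i \<noteq> j \<longrightarrow> lam i j + eps \<le> q * ft i j"
    and L_law: "\<forall>t. \<forall>i \<in> nodes Kn. \<forall>j \<in> nodes Kn. i \<noteq> j \<longrightarrow>
                  measure M {w \<in> space M. L t i w = j} = ft i j / p i"
    \<comment> \<open>requests\<close>
    and A_sym: "\<forall>t i j w. A t i j w = A t j i w"
    and A_meas: "\<forall>t. \<forall>(i, j) \<in> upairs Kn. A t i j \<in> measurable M (count_space UNIV)"
    and A_indep: "prob_space.indep_vars M (\<lambda>_. nat_seq_space) (\<lambda>(i, j) w t. A t i j w) (upairs Kn)"
    and A_src_indep: "indep_rv M
          (PiM (src_index Kn) (\<lambda>_. count_space UNIV)) (\<lambda>w. restrict (\<lambda>s. src_var C L S s w) (src_index Kn))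
          (PiM (upairs Kn) (\<lambda>_. nat_seq_space)) (\<lambda>w. restrict (\<lambda>(i, j) t. A t i j w) (upairs Kn))"
    and A_stat: "\<forall>(i, j) \<in> upairs Kn. stationary_process M (\<lambda>t. A t i j)"
    and A_erg: "\<forall>(i, j) \<in> upairs Kn. ergodic_process M (\<lambda>t. A t i j)"
    and lam_def: "\<forall>i \<in> nodes Kn. \<forall>j \<in> nodes Kn. i \<noteq> j \<longrightarrow>
                   lam i j = prob_space.expectation M (\<lambda>w. real (A 0 i j w))"
    and A_mom: "\<forall>t. \<forall>i \<in> nodes Kn. \<forall>j \<in> nodes Kn. i \<noteq> j \<longrightarrow>
                  (AE w in M. nn_cond_exp M (stat_hist M Kn C L S A t)
                     (\<lambda>w. ennreal ((real (A t i j w))\<^sup>2)) w \<le> ennreal (Amax\<^sup>2))"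
    and Lambda: "in_Lambda Kn p q (\<lambda>i j. lam i j + eps)"
  shows "switch_stable M Kn (stat_U C L S A)"
proof -
  have pair: "((\<lambda>V::real. limsup (\<lambda>t::nat. ereal ((1 / real t) *
         (\<Sum>tau<t. measure M {w \<in> space M. real (stat_U C L S A tau i j w) > V})))) \<longlongrightarrow> 0) at_top"
    if ij: "(i, j) \<in> upairs Kn" for i j
    by (rule pair_stable[OF M p q src_indep C_law S_law eps ft_sym ft_cap ft_rate L_law A_meas A_stat A_erg lam_def A_mom ij])
  show ?thesis unfolding switch_stable_def
  proof (intro ballI impI)
    fix i j assume i: "i \<in> nodes Kn" and j: "j \<in> nodes Kn" and ne: "i \<noteq> j"
    show "((\<lambda>V::real. limsup (\<lambda>t::nat. ereal ((1 / real t) *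
         (\<Sum>tau<t. measure M {w \<in> space M. real (stat_U C L S A tau i j w) > V})))) \<longlongrightarrow> 0) at_top"
    proof (cases "i < j")
      case True
      then have "(i, j) \<in> upairs Kn" using i j unfolding upairs_def by simp
      then show ?thesis by (rule pair)
    next
      case False
      then have "(j, i) \<in> upairs Kn" using i j ne unfolding upairs_def by simp
      moreover have "stat_U C L S A tau i j w = stat_U C L S A tau j i w" for tau w
        unfolding stat_U_def using UE_sym[where A=A and i=i and j=j and w=w and C=C and L=L and S=S and t=tau] A_sym by simp
      ultimately show ?thesis using pair[of j i] by simp
    qed
  qed
qed

end
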